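(* Let $E>0$, $\theta=2/E$. For $n,m\in\mathbb{N}_0$ and each sign $\pm$, the tempered distributions $f^\pm_{n,m}\in\mathcal{S}'(\mathbb{R}^2)$ defined in the context satisfy, in the sense of distributions, $$\mathsf{D}^2 f^\pm_{n,m}=\pm\,\mathcal{E}_n\,f^\pm_{n,m},\qquad \tilde{\mathsf{D}}^2 f^\pm_{n,m}=\pm\,\mathcal{E}_m\,f^\pm_{n,m},\qquad \mathcal{E}_n=2iE\big(n+\tfrac12\big).$$
   Context: Coordinates $\mathbf{x}=(t,x)\in\mathbb{R}^2$. $\mathsf{D}^2=\frac12\big[-(\partial_t^2-\partial_x^2)-2iE(x\partial_t+t\partial_x)-E^2(t^2-x^2)\big]$ and $\tilde{\mathsf{D}}^2=\frac12\big[-(\partial_t^2-\partial_x^2)+2iE(x\partial_t+t\partial_x)-E^2(t^2-x^2)\big]$. Let $E'=E/2$, let $H_n$ be the Hermite polynomials, $N_n=\big(\sqrt{E'}/(2^n n!\sqrt\pi)\big)^{1/2}$, $N_n^\pm=(\pm i)^{1/4}N_n$ (principal branches), and $$f_n^\pm(q)=N_n^\pm\,e^{\mp i(E'/2)q^2}H_n\big(\sqrt{\pm iE'}\,q\big),\qquad q\in\mathbb{R}.$$ (These are the complex-scaled harmonic oscillator eigenfunctions, generalized eigenfunctions of the inverted oscillator with imaginary eigenvalues.) Define $$f^\pm_{n,m}(t,x)=\frac1{2\pi}\int_{\mathbb{R}}dk\;e^{ikx}\,f_n^\pm\big(t-\theta k/2\big)\,\overline{f_m^\mp\big(t+\theta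 k/2\big)},$$ understood as an oscillatory integral defining an element of $\mathcal{S}'(\mathbb{R}^2)$; this is the Wigner distribution of the operator $|f_n^\pm\rangle\langle f_m^\mp|$. *)

theory Defs
  imports "HOL-Analysis.Analysis"
begin

type_synonym fn2 = "real \<Rightarrow> real \<Rightarrow> complex"

fun hermite :: "nat \<Rightarrow> complex \<Rightarrow> complex" where
  "hermite 0 z = 1"
| "hermite (Suc 0) z = 2 * z"
| "hermite (Suc (Suc n)) z = 2 * z * hermite (Suc n) z - 2 * of_nat (Suc n) * hermite n z"

definition normN :: "real \<Rightarrow> nat \<Rightarrow> real" where
  "normN E' n = sqrt (sqrt E' / (2 ^ n * fact n * sqrt pi))"

(* f_n^sigma(q), sigma = 1 for "+", sigma = -1 for "-"; principal branches via powr / csqrt *)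
definition fpm :: "real \<Rightarrow> real \<Rightarrow> nat \<Rightarrow> real \<Rightarrow> complex" where
  "fpm E' \<sigma> n q =
     ((of_real \<sigma> * \<i>) powr (1/4)) * of_real (normN E' n)
     * exp (- of_real \<sigma> * \<i> * of_real (E' / 2) * of_real (q^2))
     * hermite n (csqrt (of_real \<sigma> * \<i> * of_real E') * of_real q)"

definition wigF :: "real \<Rightarrow> real \<Rightarrow> real \<Rightarrow> nat \<Rightarrow> nat \<Rightarrow> real \<Rightarrow> real \<Rightarrow> complex" where
  "wigF E \<theta> \<sigma> n m t k =
     fpm (E/2) \<sigma> n (t - \<theta> * k / 2) * cnj (fpm (E/2) (- \<sigma>) m (t + \<theta> * k / 2))"

(* The distribution f^sigma_{n,m} acting on a test function phi:
   <f, phi> = (1/2pi) \<integral>\<integral> dt dk F(t,k) \<integral> dx e^{ikx} phi(t,x)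
   (standard meaning of the oscillatory integral, x-integration done first) *)
definition wig_pair :: "real \<Rightarrow> real \<Rightarrow> real \<Rightarrow> nat \<Rightarrow> nat \<Rightarrow> fn2 \<Rightarrow> complex" where
  "wig_pair E \<theta> \<sigma> n m \<phi> =
     (1 / (2 * of_real pi)) *
     (LINT p|lborel. wigF E \<theta> \<sigma> n m (fst p) (snd p)
        * (LINT x|lborel. exp (\<i> * of_real (snd p * x)) * \<phi> (fst p) x))"

definition dT :: "fn2 \<Rightarrow> fn2" where
  "dT u = (\<lambda>t x. vector_derivative (\<lambda>s. u s x) (at t))"
definition dX :: "fn2 \<Rightarrow> fn2" where
  "dX u = (\<lambda>t x. vector_derivative (\<lambda>y. u t y) (at x))"

fun pderivs :: "bool list \<Rightarrow> fn2 \<Rightarrow> fn2" where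
  "pderivs [] u = u"
| "pderivs (b # bs) u = (if b then dT else dX) (pderivs bs u)"

(* complex-valued C^infinity test functions with compact support on R^2 *)
definition test_fun :: "fn2 \<Rightarrow> bool" where
  "test_fun \<phi> \<longleftrightarrow>
     (\<exists>R. \<forall>t x. R < \<bar>t\<bar> \<or> R < \<bar>x\<bar> \<longrightarrow> \<phi> t x = 0) \<and>
     (\<forall>bs. continuous_on UNIV (\<lambda>p. pderivs bs \<phi> (fst p) (snd p)) \<and>
            (\<forall>t x. (\<lambda>s. pderivs bs \<phi> s x) differentiable (at t) \<and>
                   (\<lambda>y. pderivs bs \<phi> t y) differentiable (at x)))"

definition Dsq :: "real \<Rightarrow> fn2 \<Rightarrow> fn2" where
  "Dsq E u = (\<lambda>t x. (1/2) * ( - (dT (dT u) t x - dX (dX u) t x)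
       - 2 * \<i> * of_real E * (of_real x * dT u t x + of_real t * dX u t x)
       - of_real (E^2 * (t^2 - x^2)) * u t x))"

definition Dtsq :: "real \<Rightarrow> fn2 \<Rightarrow> fn2" where
  "Dtsq E u = (\<lambda>t x. (1/2) * ( - (dT (dT u) t x - dX (dX u) t x)
       + 2 * \<i> * of_real E * (of_real x * dT u t x + of_real t * dX u t x)
       - of_real (E^2 * (t^2 - x^2)) * u t x))"

(* formal transposes: (a \<partial>^alpha)^T phi = (-1)^|alpha| \<partial>^alpha (a phi) *)
definition Dsq_T :: "real \<Rightarrow> fn2 \<Rightarrow> fn2" where
  "Dsq_T E \<phi> = (\<lambda>t x. (1/2) * ( - (dT (dT \<phi>) t x - dX (dX \<phi>) t x)
       + 2 * \<i> * of_real E * (dT (\<lambda>t' x'. of_real x' * \<phi> t' x') t x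
                               + dX (\<lambda>t' x'. of_real t' * \<phi> t' x') t x)
       - of_real (E^2 * (t^2 - x^2)) * \<phi> t x))"

definition Dtsq_T :: "real \<Rightarrow> fn2 \<Rightarrow> fn2" where
  "Dtsq_T E \<phi> = (\<lambda>t x. (1/2) * ( - (dT (dT \<phi>) t x - dX (dX \<phi>) t x)
       - 2 * \<i> * of_real E * (dT (\<lambda>t' x'. of_real x' * \<phi> t' x') t x
                               + dX (\<lambda>t' x'. of_real t' * \<phi> t' x') t x)
       - of_real (E^2 * (t^2 - x^2)) * \<phi> t x))"

definition calE :: "real \<Rightarrow> nat \<Rightarrow> complex" where
  "calE E n = 2 * \<i> * of_real E * (of_nat n + 1/2)"

end

theory Submission
  imports Defs "HOL-Probability.Sinc_Integral" "HOL-Real_Asymp.Real_Asymp"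
begin

lemma hermite_rec: "hermite (Suc n) z = 2 * z * hermite n z - 2 * of_nat n * hermite (n-1) z"
  by (cases n) simp_all

lemma hermite_rec2: "n \<ge> 1 \<Longrightarrow> hermite n z = 2 * z * hermite (n-1) z - 2 * of_nat (n-1) * hermite (n-2) z"
  using hermite_rec[of "n-1" z] by (cases n) auto

lemma hermite_deriv: "(hermite n has_field_derivative (2 * of_nat n * hermite (n-1) z)) (at z)"
proof (induction n arbitrary: z rule: less_induct)
  case (less n)
  show ?case
  proof (cases n)
    case 0 then show ?thesis by simp
  next
    case (Suc n1)
    show ?thesis
    proof (cases n1)
      case 0 then show ?thesis using Suc
        by (auto intro!: derivative_eq_intros)
    next
      case (Suc n2)
      have h1: "(hermite (Suc n2) has_field_derivative (2 * of_nat (Suc n2) * hermite n2 z)) (at z)"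
        using less[of "Suc n2"] \<open>n = Suc n1\<close> Suc by simp
      have h0: "(hermite n2 has_field_derivative (2 * of_nat n2 * hermite (n2-1) z)) (at z)"
        using less[of n2] \<open>n = Suc n1\<close> Suc by simp
      have e: "hermite n = (\<lambda>z. 2 * z * hermite (Suc n2) z - 2 * of_nat (Suc n2) * hermite n2 z)"
        using \<open>n = Suc n1\<close> Suc by (auto simp: fun_eq_iff)
      have r: "hermite (Suc n2) z = 2 * z * hermite n2 z - 2 * of_nat n2 * hermite (n2-1) z"
        by (rule hermite_rec)
      show ?thesis unfolding e
        apply (rule derivative_eq_intros h1 h0 refl)+
        apply (simp only: r \<open>n = Suc n1\<close> Suc diff_Suc_1)
        by (simp add: algebra_simps)
    qed
  qed
qed

lemma hermite_lin_deriv: "D = s * (2 * of_nat n * hermite (n-1) (s * z)) \<Longrightarrow>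
   ((\<lambda>x. hermite n (s * x)) has_field_derivative D) (at z)"
proof -
  have "((\<lambda>x. s * x) has_field_derivative s) (at z)" by (auto intro!: derivative_eq_intros)
  from DERIV_chain2[OF hermite_deriv[of n "s * z"] this] show "D = s * (2 * of_nat n * hermite (n-1) (s * z)) \<Longrightarrow> ?thesis"
    by (simp add: algebra_simps)
qed

definition Gc :: "complex \<Rightarrow> complex \<Rightarrow> complex \<Rightarrow> nat \<Rightarrow> complex \<Rightarrow> complex" where
  "Gc c a s n z = c * exp (-(a * z^2/2)) * hermite n (s * z)"

definition G1 :: "complex \<Rightarrow> complex \<Rightarrow> complex \<Rightarrow> nat \<Rightarrow> complex \<Rightarrow> complex" where
  "G1 c a s n z = c * exp (-(a * z^2/2)) * (-a * z * hermite n (s * z) + s * 2 * of_nat n * hermite (n-1) (s * z))"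

lemma Gc_deriv: "(Gc c a s n has_field_derivative G1 c a s n z) (at z)"
  unfolding Gc_def[abs_def] G1_def
  by (rule derivative_eq_intros hermite_lin_deriv refl | simp add: algebra_simps power2_eq_square)+

lemma G1_deriv:
  assumes "s^2 = a"
  shows "(G1 c a s n has_field_derivative ((a^2 * z^2 - a * (2 * of_nat n+1)) * Gc c a s n z)) (at z)"
proof -
  have D: "(G1 c a s n has_field_derivative
     c * exp (-(a * z^2/2)) * ((-a * z) * (-a * z * hermite n (s * z) + s * 2 * of_nat n * hermite (n-1) (s * z))
      + (-a * hermite n (s * z) - a * z * s * 2 * of_nat n * hermite (n-1) (s * z)
         + s * 2 * of_nat n * s * 2 * of_nat (n-1) * hermite (n-1-1) (s * z)))) (at z)"
    unfolding G1_def[abs_def]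
    by (rule derivative_eq_intros hermite_lin_deriv refl | simp add: algebra_simps power2_eq_square)+
  have key: "of_nat n * (2 * (s * z) * hermite (n-1) (s * z) - 2 * of_nat (n-1) * hermite (n-2) (s * z))
      = of_nat n * hermite n (s * z)"
  proof (cases "n \<ge> 1")
    case True then show ?thesis using hermite_rec2[OF True, of "s * z"] by simp
  qed simp
  have a: "a = s * s" using assms by (simp add: power2_eq_square)
  let ?H0 = "hermite n (s * z)" and ?H1 = "hermite (n-1) (s * z)" and ?H2 = "hermite (n-2) (s * z)"
  have nn: "n - 1 - 1 = n - 2" by simp
  have "(-a * z) * (-a * z * ?H0 + s * 2 * of_nat n * ?H1)
      + (-a * ?H0 - a * z * s * 2 * of_nat n * ?H1 + s * 2 * of_nat n * s * 2 * of_nat (n-1) * ?H2)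
      = a^2 * z^2 * ?H0 - a * ?H0 - 2 * a * (of_nat n * (2 * (s * z) * ?H1 - 2 * of_nat (n-1) * ?H2))"
    unfolding a by (simp add: algebra_simps power2_eq_square)
  also have "\<dots> = (a^2 * z^2 - a * (2 * of_nat n+1)) * ?H0"
    unfolding key by (simp add: algebra_simps)
  finally have inner: "(-a * z) * (-a * z * ?H0 + s * 2 * of_nat n * ?H1)
      + (-a * ?H0 - a * z * s * 2 * of_nat n * ?H1 + s * 2 * of_nat n * s * 2 * of_nat (n-1) * ?H2)
      = (a^2 * z^2 - a * (2 * of_nat n+1)) * ?H0" .
  show ?thesis
    apply (rule DERIV_cong[OF D])
    unfolding Gc_def nn inner by simp
qed

definition supp :: "fn2 \<Rightarrow> real \<Rightarrow> bool" where
  "supp h R \<longleftrightarrow> (\<forall>t x. R < \<bar>t\<bar> \<or> R < \<bar>x\<bar> \<longrightarrow> h t x = 0)"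

definition smooth2 :: "fn2 \<Rightarrow> bool" where
  "smooth2 h \<longleftrightarrow> (\<forall>bs. continuous_on UNIV (\<lambda>p. pderivs bs h (fst p) (snd p)) \<and>
            (\<forall>t x. (\<lambda>s. pderivs bs h s x) differentiable (at t) \<and>
                   (\<lambda>y. pderivs bs h t y) differentiable (at x)))"

lemma test_fun_iff: "test_fun h \<longleftrightarrow> (\<exists>R. supp h R) \<and> smooth2 h"
  by (simp add: test_fun_def supp_def smooth2_def)

lemma pderivs_append: "pderivs (bs @ cs) h = pderivs bs (pderivs cs h)"
  by (induction bs) auto

lemma smooth2_pderivs: "smooth2 h \<Longrightarrow> smooth2 (pderivs cs h)"
  unfolding smooth2_def by (metis pderivs_append)

lemma smooth2_dT: "smooth2 h \<Longrightarrow> smooth2 (dT h)"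
  using smooth2_pderivs[of h "[True]"] by simp
lemma smooth2_dX: "smooth2 h \<Longrightarrow> smooth2 (dX h)"
  using smooth2_pderivs[of h "[False]"] by simp

lemma vd_zero_open:
  fixes f :: "real \<Rightarrow> complex"
  assumes "open S" "x \<in> S" "\<And>y. y \<in> S \<Longrightarrow> f y = 0"
  shows "vector_derivative f (at x) = 0"
proof -
  have "(f has_vector_derivative 0) (at x)"
    by (rule has_vector_derivative_transform_within_open[of "\<lambda>y. 0" 0 x S]) (use assms in auto)
  then show ?thesis by (rule vector_derivative_at)
qed

lemma supp_dT: "supp h R \<Longrightarrow> supp (dT h) R"
  unfolding supp_def dT_def
proof (intro allI impI)
  fix t x assume h: "\<forall>t x. R < \<bar>t\<bar> \<or> R < \<bar>x\<bar> \<longrightarrow> h t x = 0" and tx: "R < \<bar>t\<bar> \<or> R < \<bar>x\<bar>"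
  show "vector_derivative (\<lambda>s. h s x) (at t) = 0"
  proof (cases "R < \<bar>x\<bar>")
    case True then show ?thesis using h by (simp)
  next
    case False
    then have "R < \<bar>t\<bar>" using tx by auto
    then show ?thesis
      by (intro vd_zero_open[of "{s. R < \<bar>s\<bar>}"]) (use h in \<open>auto intro!: open_Collect_less continuous_intros\<close>)
  qed
qed

lemma supp_dX: "supp h R \<Longrightarrow> supp (dX h) R"
  unfolding supp_def dX_def
proof (intro allI impI)
  fix t x assume h: "\<forall>t x. R < \<bar>t\<bar> \<or> R < \<bar>x\<bar> \<longrightarrow> h t x = 0" and tx: "R < \<bar>t\<bar> \<or> R < \<bar>x\<bar>"
  show "vector_derivative (\<lambda>y. h t y) (at x) = 0"
  proof (cases "R < \<bar>t\<bar>")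
    case True then show ?thesis using h by (simp)
  next
    case False
    then have "R < \<bar>x\<bar>" using tx by auto
    then show ?thesis
      by (intro vd_zero_open[of "{s. R < \<bar>s\<bar>}"]) (use h in \<open>auto intro!: open_Collect_less continuous_intros\<close>)
  qed
qed

lemma supp_pderivs: "supp h R \<Longrightarrow> supp (pderivs bs h) R"
  by (induction bs) (auto intro: supp_dT supp_dX)

lemma test_pderivs: "test_fun h \<Longrightarrow> test_fun (pderivs bs h)"
  unfolding test_fun_iff using supp_pderivs smooth2_pderivs by blast

lemma test_dT: "test_fun h \<Longrightarrow> test_fun (dT h)"
  using test_pderivs[of h "[True]"] by simp
lemma test_dX: "test_fun h \<Longrightarrow> test_fun (dX h)"
  using test_pderivs[of h "[False]"] by simp

definition rem :: "nat \<Rightarrow> bool list \<Rightarrow> bool list" where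
  "rem j bs = take j bs @ drop (Suc j) bs"

lemma rem_Suc[simp]: "rem (Suc j) (b # bs) = b # rem j bs"
  by (simp add: rem_def)
lemma rem_0[simp]: "rem 0 (b # bs) = bs"
  by (simp add: rem_def)

definition xm :: "complex \<Rightarrow> fn2 \<Rightarrow> fn2" where
  "xm c h = (\<lambda>t x. c * of_real x * h t x)"

lemma smooth2_D:
  assumes "smooth2 h"
  shows "((\<lambda>s. pderivs bs h s x) has_vector_derivative pderivs (True # bs) h t x) (at t)"
    "((\<lambda>y. pderivs bs h t y) has_vector_derivative pderivs (False # bs) h t x) (at x)"
  using assms unfolding smooth2_def by (auto simp: dT_def dX_def vector_derivative_works[symmetric])

lemma pderivs_xm:
  assumes h: "smooth2 h"
  shows "pderivs bs (xm c h) = (\<lambda>t x. c * of_real x * pderivs bs h t x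
            + c * (\<Sum>j<length bs. (if bs!j then 0 else 1) * pderivs (rem j bs) h t x))"
proof (induction bs)
  case Nil then show ?case by (simp add: xm_def)
next
  case (Cons b bs)
  let ?S = "\<lambda>t x. c * of_real x * pderivs bs h t x
            + c * (\<Sum>j<length bs. (if bs!j then 0 else 1) * pderivs (rem j bs) h t x)"
  have dt: "((\<lambda>s. ?S s x) has_vector_derivative
      (c * of_real x * pderivs (True # bs) h t x
       + c * (\<Sum>j<length bs. (if bs!j then 0 else 1) * pderivs (True # rem j bs) h t x))) (at t)" for t x
    by (rule derivative_eq_intros smooth2_D[OF h] smooth2_D[OF smooth2_pderivs[OF h]] refl | simp)+
  have dx: "((\<lambda>y. ?S t y) has_vector_derivative
      (c * pderivs bs h t x + c * of_real x * pderivs (False # bs) h t x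
       + c * (\<Sum>j<length bs. (if bs!j then 0 else 1) * pderivs (False # rem j bs) h t x))) (at x)" for t x
    by (rule derivative_eq_intros smooth2_D[OF h] smooth2_D[OF smooth2_pderivs[OF h]] refl | simp add: algebra_simps)+
  show ?case
  proof (cases b)
    case True
    have "pderivs (True # bs) (xm c h) t x = vector_derivative (\<lambda>s. ?S s x) (at t)" for t x
      using Cons by (simp add: dT_def)
    then show ?thesis
      using True by (auto simp: fun_eq_iff vector_derivative_at[OF dt] sum.lessThan_Suc_shift simp del: sum.lessThan_Suc)
  next
    case False
    have "pderivs (False # bs) (xm c h) t x = vector_derivative (\<lambda>y. ?S t y) (at x)" for t x
      using Cons by (simp add: dX_def)
    then have "pderivs (False # bs) (xm c h) t x = c * pderivs bs h t x + c * of_real x * pderivs (False # bs) h t x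
       + c * (\<Sum>j<length bs. (if bs!j then 0 else 1) * pderivs (False # rem j bs) h t x)" for t x
      using vector_derivative_at[OF dx] by simp
    then show ?thesis
      using False by (auto simp: fun_eq_iff vector_derivative_at[OF dx] sum.lessThan_Suc_shift algebra_simps simp del: sum.lessThan_Suc)
  qed
qed

lemma smooth2_xm:
  assumes h: "smooth2 h"
  shows "smooth2 (xm c h)"
  unfolding smooth2_def pderivs_xm[OF h]
proof (intro allI conjI)
  fix bs
  have c: "continuous_on UNIV (\<lambda>p. pderivs cs h (fst p) (snd p))" for cs
    using h smooth2_def by blast
  show "continuous_on UNIV (\<lambda>p. c * complex_of_real (snd p) * pderivs bs h (fst p) (snd p) +
          c * (\<Sum>j<length bs. (if bs ! j then 0 else 1) * pderivs (rem j bs) h (fst p) (snd p)))"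
    by (intro continuous_intros c)
  fix t x
  have d1: "(\<lambda>s. pderivs cs h s x) differentiable (at t)" "(\<lambda>y. pderivs cs h t y) differentiable (at x)" for cs
    using h smooth2_def by blast+
  show "(\<lambda>s. c * complex_of_real x * pderivs bs h s x +
              c * (\<Sum>j<length bs. (if bs ! j then 0 else 1) * pderivs (rem j bs) h s x)) differentiable at t"
    by (auto intro!: derivative_intros d1)
  show "(\<lambda>y. c * complex_of_real y * pderivs bs h t y +
              c * (\<Sum>j<length bs. (if bs ! j then 0 else 1) * pderivs (rem j bs) h t y)) differentiable at x"
    by (auto intro!: derivative_intros d1)
qed

lemma supp_xm: "supp h R \<Longrightarrow> supp (xm c h) R"
  by (simp add: supp_def xm_def)

lemma test_xm: "test_fun h \<Longrightarrow> test_fun (xm c h)"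
  unfolding test_fun_iff using supp_xm smooth2_xm by blast

lemma ibp_R:
  fixes u v u' v' :: "real \<Rightarrow> complex"
  assumes du: "\<And>x. (u has_vector_derivative u' x) (at x)"
    and dv: "\<And>x. (v has_vector_derivative v' x) (at x)"
    and cu: "continuous_on UNIV u'" and cv: "continuous_on UNIV v'"
    and i1: "integrable lborel (\<lambda>x. u x * v' x)"
    and i2: "integrable lborel (\<lambda>x. u' x * v x)"
    and lt: "((\<lambda>x. u x * v x) \<longlongrightarrow> 0) at_top"
    and lb: "((\<lambda>x. u x * v x) \<longlongrightarrow> 0) at_bot"
  shows "(LINT x|lborel. u x * v' x) = - (LINT x|lborel. u' x * v x)"
proof -
  have D: "((\<lambda>x. u x * v x) has_vector_derivative (u x * v' x + u' x * v x)) (at x)" for x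
    using has_vector_derivative_mult[OF du dv] by (simp add: algebra_simps)
  have cu0: "isCont u x" "isCont v x" for x
    using du dv vector_derivative_works has_vector_derivative_continuous by blast+
  have cf: "isCont (\<lambda>x. u x * v' x + u' x * v x) x" for x
    using cu cv cu0[of x] by (auto intro!: continuous_intros simp: continuous_on_eq_continuous_at)
  have int: "integrable lborel (\<lambda>x. u x * v' x + u' x * v x)"
    using i1 i2 by simp
  have "(LBINT x=-\<infinity>..\<infinity>. u x * v' x + u' x * v x) = 0 - 0"
    apply (rule interval_integral_FTC_integrable[where F="\<lambda>x. u x * v x"])
    using D cf int lt lb by (auto simp: ereal_tendsto_simps set_integrable_def)
  then have "(LINT x|lborel. u x * v' x + u' x * v x) = 0"
    by (simp add: interval_lebesgue_integral_def set_lebesgue_integral_def)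
  then show ?thesis using i1 i2 by (simp add: eq_neg_iff_add_eq_0)
qed

lemma exp_ikx_deriv:
  "((\<lambda>x. exp (\<i> * of_real (k * x))) has_vector_derivative \<i> * of_real k * exp (\<i> * of_real (k * x))) (at x within S)"
proof -
  have "((\<lambda>z. exp (\<i> * (of_real k * z))) has_field_derivative \<i> * of_real k * exp (\<i> * (of_real k * of_real x))) (at (of_real x))"
    by (rule derivative_eq_intros refl | simp)+
  from has_vector_derivative_real_field[OF this] show ?thesis by simp
qed

lemma exp_ikx_deriv_k:
  "((\<lambda>k. exp (\<i> * of_real (k * x))) has_vector_derivative \<i> * of_real x * exp (\<i> * of_real (k * x))) (at k within S)"
proof -
  have "((\<lambda>z. exp (\<i> * (z * of_real x))) has_field_derivative \<i> * of_real x * exp (\<i> * (of_real k * of_real x))) (at (of_real k))"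
    by (rule derivative_eq_intros refl | simp)+
  from has_vector_derivative_real_field[OF this] show ?thesis by simp
qed

definition psi :: "fn2 \<Rightarrow> real \<Rightarrow> real \<Rightarrow> complex" where
  "psi h t k = (LINT x|lborel. exp (\<i> * of_real (k * x)) * h t x)"

lemma supp_mono: "supp h R \<Longrightarrow> R \<le> R' \<Longrightarrow> supp h R'"
  unfolding supp_def by force

lemma test_supp_pos: "test_fun h \<Longrightarrow> \<exists>R>0. supp h R"
  unfolding test_fun_iff by (meson gt_ex less_le_not_le supp_mono linorder_le_cases order.strict_trans1 zero_less_one)

lemma test_cont: "test_fun h \<Longrightarrow> continuous_on UNIV (\<lambda>p. h (fst p) (snd p))"
  unfolding test_fun_iff smooth2_def using pderivs.simps(1) by metis

lemma cont_x: "continuous_on UNIV (\<lambda>p. h (fst p) (snd p)) \<Longrightarrow> continuous_on UNIV (\<lambda>x. h t x)"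
  by (rule continuous_on_compose2[where f="\<lambda>x. (t, x)" and g="\<lambda>p. h (fst p) (snd p)", simplified])
     (auto intro!: continuous_intros)

lemma cont_t: "continuous_on UNIV (\<lambda>p. h (fst p) (snd p)) \<Longrightarrow> continuous_on UNIV (\<lambda>t. h t x)"
  by (rule continuous_on_compose2[where f="\<lambda>t. (t, x)" and g="\<lambda>p. h (fst p) (snd p)", simplified])
     (auto intro!: continuous_intros)

lemma integrable_cs:
  fixes f :: "real \<Rightarrow> complex"
  assumes "continuous_on UNIV f" "\<And>x. R < \<bar>x\<bar> \<Longrightarrow> f x = 0"
  shows "integrable lborel f"
proof -
  have "integrable lborel (\<lambda>x. indicator {-R..R} x *\<^sub>R f x)"
    by (rule borel_integrable_compact) (auto intro: continuous_on_subset[OF assms(1)])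
  moreover have "(\<lambda>x. indicator {-R..R} x *\<^sub>R f x) = f"
    using assms(2) by (auto simp: fun_eq_iff indicator_def abs_le_iff not_le)
  ultimately show ?thesis by simp
qed

lemma bounded_cs:
  assumes c: "continuous_on UNIV (\<lambda>p. h (fst p) (snd p))" and s: "supp h R"
  shows "\<exists>M. \<forall>t x. norm (h t x) \<le> M"
proof -
  have "compact ((\<lambda>p. h (fst p) (snd p)) ` cbox (-R, -R) (R, R))"
    by (rule compact_continuous_image) (auto intro: continuous_on_subset[OF c])
  then obtain M where M: "\<And>y. y \<in> (\<lambda>p. h (fst p) (snd p)) ` cbox (-R, -R) (R, R) \<Longrightarrow> norm y \<le> M"
    using compact_imp_bounded bounded_iff by metis
  have "norm (h t x) \<le> max M 0" for t x
  proof (cases "R < \<bar>t\<bar> \<or> R < \<bar>x\<bar>")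
    case True then have "h t x = 0" using s unfolding supp_def by blast
    then show ?thesis by simp
  next
    case False
    then have "(t, x) \<in> cbox (-R, -R) (R, R)" by (auto simp: cbox_Pair_iff abs_le_iff)
    then show ?thesis using M[of "h t x"] by force
  qed
  then show ?thesis by blast
qed

lemma psi_integrable:
  assumes "test_fun h"
  shows "integrable lborel (\<lambda>x. exp (\<i> * of_real (k * x)) * h t x)"
proof -
  obtain R where R: "supp h R" using assms test_fun_iff by blast
  show ?thesis
    by (rule integrable_cs[where R=R]) (use R cont_x[OF test_cont[OF assms]] in \<open>auto intro!: continuous_intros simp: supp_def\<close>)
qed

lemma psi_bounded:
  assumes "test_fun h"
  shows "\<exists>B. \<forall>t k. norm (psi h t k) \<le> B"
proof -
  obtain R where R: "supp h R" using assms test_fun_iff by blast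
  obtain M where M: "\<And>t x. norm (h t x) \<le> M" using bounded_cs[OF test_cont[OF assms] R] by blast
  have ii: "integrable lborel (\<lambda>x. indicator {-R..R} x * M :: real)"
    using borel_integrable_compact[of "{-R..R}" "\<lambda>x. M"] by simp
  have "norm (psi h t k) \<le> (LINT x|lborel. indicator {-R..R} x * M)" for t k
  proof -
    have "norm (psi h t k) \<le> (LINT x|lborel. norm (exp (\<i> * of_real (k * x)) * h t x))"
      unfolding psi_def by (rule integral_norm_bound)
    also have "\<dots> \<le> (LINT x|lborel. indicator {-R..R} x * M)"
    proof (rule integral_mono[OF _ ii])
      show "integrable lborel (\<lambda>x. norm (exp (\<i> * of_real (k * x)) * h t x))"
        using psi_integrable[OF assms] by (rule integrable_norm)
      fix x
      show "norm (exp (\<i> * of_real (k * x)) * h t x) \<le> indicator {-R..R} x * M"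
        using R M[of t x] unfolding supp_def norm_mult
        by (cases "R < \<bar>x\<bar>") (auto simp: indicator_def abs_le_iff norm_exp_i_times[of "k * x", simplified])
    qed
    finally show ?thesis .
  qed
  then show ?thesis by blast
qed

lemma psi_supp:
  assumes "supp h R" "R < \<bar>t\<bar>"
  shows "psi h t k = 0"
  using assms by (simp add: psi_def supp_def)

lemma psi_dX:
  assumes h: "test_fun h"
  shows "psi (dX h) t k = - \<i> * of_real k * psi h t k"
proof -
  obtain R where R: "supp h R" using assms test_fun_iff by blast
  have sm: "smooth2 h" using h test_fun_iff by blast
  have dv: "((\<lambda>y. h t y) has_vector_derivative dX h t x) (at x)" for x
    using smooth2_D(2)[OF sm, of "[]" t x] by (simp add: dX_def)
  have cdx: "continuous_on UNIV (\<lambda>x. dX h t x)"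
    using cont_x[OF test_cont[OF test_dX[OF h]]] .
  have ev1: "\<forall>\<^sub>F x in at_top. exp (\<i> * of_real (k * x)) * h t x = 0"
    using R unfolding supp_def
    by (auto simp: eventually_at_top_linorder intro!: exI[of _ "\<bar>R\<bar>+1"])
  have ev2: "\<forall>\<^sub>F x in at_bot. exp (\<i> * of_real (k * x)) * h t x = 0"
    using R unfolding supp_def
    by (auto simp: eventually_at_bot_linorder intro!: exI[of _ "-\<bar>R\<bar>-1"])
  have "(LINT x|lborel. exp (\<i> * of_real (k * x)) * dX h t x)
       = - (LINT x|lborel. (\<i> * of_real k * exp (\<i> * of_real (k * x))) * h t x)"
  proof (rule ibp_R[OF _ dv])
    show "((\<lambda>x. exp (\<i> * of_real (k * x))) has_vector_derivative \<i> * of_real k * exp (\<i> * of_real (k * x))) (at x)" for x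
      by (rule exp_ikx_deriv)
    show "continuous_on UNIV (\<lambda>x. \<i> * of_real k * exp (\<i> * of_real (k * x)))"
      by (intro continuous_intros)
    show "continuous_on UNIV (dX h t)" using cdx by simp
    show "integrable lborel (\<lambda>x. exp (\<i> * of_real (k * x)) * dX h t x)"
      using psi_integrable[OF test_dX[OF h]] .
    show "integrable lborel (\<lambda>x. \<i> * of_real k * exp (\<i> * of_real (k * x)) * h t x)"
      using integrable_mult_right[OF psi_integrable[OF h], of "\<i> * of_real k"] by (simp add: mult.assoc)
    show "((\<lambda>x. exp (\<i> * of_real (k * x)) * h t x) \<longlongrightarrow> 0) at_top"
      using ev1 by (simp add: tendsto_eventually)
    show "((\<lambda>x. exp (\<i> * of_real (k * x)) * h t x) \<longlongrightarrow> 0) at_bot"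
      using ev2 by (simp add: tendsto_eventually)
  qed
  also have "\<dots> = - \<i> * of_real k * psi h t k"
    unfolding psi_def by (simp add: mult.assoc)
  finally show ?thesis unfolding psi_def .
qed

lemma psi_pd: "test_fun h \<Longrightarrow> psi (pderivs (replicate j False) h) t k = (- \<i> * of_real k) ^ j * psi h t k"
proof (induction j)
  case (Suc j)
  have "psi (pderivs (replicate (Suc j) False) h) t k = psi (dX (pderivs (replicate j False) h)) t k" by simp
  also have "\<dots> = - \<i> * of_real k * psi (pderivs (replicate j False) h) t k"
    by (rule psi_dX[OF test_pderivs[OF Suc.prems]])
  finally show ?case using Suc by simp
qed simp

lemma one_plus_pow_le: "(0::real) \<le> a \<Longrightarrow> (1 + a) ^ N \<le> 2 ^ N * (1 + a ^ N)"
proof -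
  assume a: "0 \<le> a"
  have "(1 + a) ^ N \<le> (2 * max 1 a) ^ N" using a by (intro power_mono) auto
  also have "\<dots> = 2 ^ N * max 1 a ^ N" by (simp add: power_mult_distrib)
  also have "max 1 a ^ N \<le> 1 + a ^ N" using a by (cases "a \<le> 1") (auto simp: max_def)
  then have "2 ^ N * max 1 a ^ N \<le> 2 ^ N * (1 + a ^ N)" by simp
  finally show ?thesis .
qed

lemma psi_decay:
  assumes h: "test_fun h"
  shows "\<exists>B. \<forall>t k. norm (psi h t k) * (1 + \<bar>k\<bar>) ^ N \<le> B"
proof -
  obtain B0 where B0: "\<And>t k. norm (psi h t k) \<le> B0" using psi_bounded[OF h] by blast
  obtain BN where BN: "\<And>t k. norm (psi (pderivs (replicate N False) h) t k) \<le> BN"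
    using psi_bounded[OF test_pderivs[OF h]] by blast
  have "norm (psi h t k) * (1 + \<bar>k\<bar>) ^ N \<le> 2 ^ N * (B0 + BN)" for t k
  proof -
    have e: "norm (psi (pderivs (replicate N False) h) t k) = \<bar>k\<bar> ^ N * norm (psi h t k)"
      by (simp add: psi_pd[OF h] norm_mult norm_power)
    have "norm (psi h t k) * (1 + \<bar>k\<bar>) ^ N \<le> norm (psi h t k) * (2 ^ N * (1 + \<bar>k\<bar> ^ N))"
      by (intro mult_left_mono one_plus_pow_le) auto
    also have "\<dots> = 2 ^ N * (norm (psi h t k) + norm (psi (pderivs (replicate N False) h) t k))"
      by (simp add: e algebra_simps)
    also have "\<dots> \<le> 2 ^ N * (B0 + BN)"
      by (intro mult_left_mono add_mono B0 BN) auto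
    finally show ?thesis .
  qed
  then show ?thesis by blast
qed

lemma psi_meas:
  assumes h: "test_fun h"
  shows "(\<lambda>p. psi h (fst p) (snd p)) \<in> borel_measurable borel"
proof -
  have c: "continuous_on UNIV (\<lambda>q. h (fst q) (snd q))" by (rule test_cont[OF h])
  have "(\<lambda>(p, x). exp (\<i> * of_real (snd p * x)) * h (fst p) x) \<in> borel_measurable (borel \<Otimes>\<^sub>M borel)"
    unfolding borel_prod
    apply (rule borel_measurable_continuous_onI)
    apply (simp add: case_prod_beta)
    apply (intro continuous_intros)
    using continuous_on_compose[OF _ continuous_on_subset[OF c subset_UNIV], where f="\<lambda>q. (fst (fst q), snd q)" and s=UNIV]
    by (simp add: o_def continuous_on_fst continuous_on_snd continuous_on_Pair continuous_on_id)
  then have m: "(\<lambda>(p, x). exp (\<i> * of_real (snd p * x)) * h (fst p) x) \<in> borel_measurable (borel \<Otimes>\<^sub>M lborel)"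
    using measurable_cong_sets[OF sets_pair_measure_cong[OF refl sets_lborel] refl] by blast
  show ?thesis
    unfolding psi_def using lborel.borel_measurable_lebesgue_integral[OF m] by simp
qed

lemma psi_henstock:
  assumes h: "test_fun h" and R: "supp h R"
  shows "psi h t k = integral (cbox (-R) R) (\<lambda>x. exp (\<i> * of_real (k * x)) * h t x)"
proof -
  have "psi h t k = integral UNIV (\<lambda>x. exp (\<i> * of_real (k * x)) * h t x)"
    unfolding psi_def by (rule integral_lborel[symmetric, OF psi_integrable[OF h]])
  also have "(\<lambda>x. exp (\<i> * of_real (k * x)) * h t x) = (\<lambda>x. if x \<in> cbox (-R) R then exp (\<i> * of_real (k * x)) * h t x else 0)"
    using R by (auto simp: fun_eq_iff supp_def abs_le_iff not_le)
  also have "integral UNIV \<dots> = integral (cbox (-R) R) (\<lambda>x. exp (\<i> * of_real (k * x)) * h t x)"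
    by (rule integral_restrict_UNIV)
  finally show ?thesis .
qed

lemma psi_dk:
  assumes h: "test_fun h"
  shows "((\<lambda>k. psi h t k) has_vector_derivative psi (xm \<i> h) t k) (at k)"
proof -
  obtain R where R: "supp h R" using assms test_fun_iff by blast
  have R2: "supp (xm \<i> h) R" using supp_xm[OF R] .
  have cx: "continuous_on UNIV (\<lambda>x. h t x)" using cont_x[OF test_cont[OF h]] .
  have "((\<lambda>k. integral (cbox (-R) R) (\<lambda>x. exp (\<i> * of_real (k * x)) * h t x)) has_vector_derivative
        integral (cbox (-R) R) (\<lambda>x. \<i> * of_real x * exp (\<i> * of_real (k * x)) * h t x)) (at k within UNIV)"
  proof (rule leibniz_rule_vector_derivative)
    fix k' x
    show "((\<lambda>k. exp (\<i> * of_real (k * x)) * h t x) has_vector_derivative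
          \<i> * of_real x * exp (\<i> * of_real (k' * x)) * h t x) (at k' within UNIV)"
      using has_vector_derivative_mult_left[OF exp_ikx_deriv_k[of x k' UNIV], of "h t x"]
      by (simp add: ac_simps)
  next
    fix k'
    show "(\<lambda>x. exp (\<i> * of_real (k' * x)) * h t x) integrable_on cbox (- R) R"
      by (rule integrable_continuous, rule continuous_on_subset[OF _ subset_UNIV], intro continuous_intros cx)
  next
    show "continuous_on (UNIV \<times> cbox (- R) R) (\<lambda>(k, x). \<i> * of_real x * exp (\<i> * of_real (k * x)) * h t x)"
      apply (simp add: case_prod_beta)
      apply (rule continuous_on_subset[OF _ subset_UNIV])
      apply (intro continuous_intros)
      by (rule continuous_on_compose2[OF cx]) (auto intro!: continuous_intros)
  qed auto
  then show ?thesis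
    unfolding psi_henstock[OF h R, abs_def] psi_henstock[OF test_xm[OF h] R2]
    by (simp add: xm_def algebra_simps)
qed

lemma psi_dt:
  assumes h: "test_fun h"
  shows "((\<lambda>t. psi h t k) has_vector_derivative psi (dT h) t k) (at t)"
proof -
  obtain R where R: "supp h R" using assms test_fun_iff by blast
  have R2: "supp (dT h) R" using supp_dT[OF R] .
  have sm: "smooth2 h" using h test_fun_iff by blast
  have cp: "continuous_on UNIV (\<lambda>p. dT h (fst p) (snd p))" using test_cont[OF test_dT[OF h]] .
  have "((\<lambda>t. integral (cbox (-R) R) (\<lambda>x. exp (\<i> * of_real (k * x)) * h t x)) has_vector_derivative
        integral (cbox (-R) R) (\<lambda>x. exp (\<i> * of_real (k * x)) * dT h t x)) (at t within UNIV)"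
  proof (rule leibniz_rule_vector_derivative)
    fix t' x
    show "((\<lambda>t. exp (\<i> * of_real (k * x)) * h t x) has_vector_derivative
          exp (\<i> * of_real (k * x)) * dT h t' x) (at t' within UNIV)"
      using smooth2_D(1)[OF sm, of "[]" x t'] by (auto intro!: derivative_eq_intros simp: dT_def)
  next
    fix t'
    show "(\<lambda>x. exp (\<i> * of_real (k * x)) * h t' x) integrable_on cbox (- R) R"
      by (rule integrable_continuous, rule continuous_on_subset[OF _ subset_UNIV], intro continuous_intros cont_x[OF test_cont[OF h]])
  next
    show "continuous_on (UNIV \<times> cbox (- R) R) (\<lambda>(t, x). exp (\<i> * of_real (k * x)) * dT h t x)"
      apply (simp add: case_prod_beta)
      apply (rule continuous_on_subset[OF _ subset_UNIV])
      apply (intro continuous_intros)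
      using cp by simp
  qed auto
  then show ?thesis
    unfolding psi_henstock[OF h R, abs_def] psi_henstock[OF test_dT[OF h] R2]
    by simp
qed

definition Temp :: "fn2 \<Rightarrow> bool" where
  "Temp A \<longleftrightarrow> continuous_on UNIV (\<lambda>p. A (fst p) (snd p)) \<and>
     (\<exists>C D. \<forall>t k. norm (A t k) \<le> C * ((1 + \<bar>t\<bar>) * (1 + \<bar>k\<bar>)) ^ D)"

definition II :: "fn2 \<Rightarrow> fn2 \<Rightarrow> complex" where
  "II A h = (LINT p|lborel. A (fst p) (snd p) * psi h (fst p) (snd p))"

lemma integrable_inv_sq: "integrable lborel (\<lambda>k::real. inverse (1 + k^2))"
  using integrable_inverse_1_plus_square by (simp add: set_integrable_def)

lemma lim_inv_sq: "((\<lambda>k::real. K * inverse (1 + k^2)) \<longlongrightarrow> 0) at_top"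
  "((\<lambda>k::real. K * inverse (1 + k^2)) \<longlongrightarrow> 0) at_bot"
  by real_asymp+

lemma sq_le: "1 + k^2 \<le> (1 + \<bar>k\<bar>) ^ 2" for k :: real
  by (simp add: power2_eq_square algebra_simps)

lemma decay2_bound:
  fixes f :: "real \<Rightarrow> complex"
  assumes "\<And>k. norm (f k) * (1 + \<bar>k\<bar>) ^ 2 \<le> K"
  shows "norm (f k) \<le> K * inverse (1 + k^2)"
proof -
  have p: "0 < 1 + k^2" by (simp add: add_pos_nonneg)
  have "norm (f k) * (1 + k^2) \<le> norm (f k) * (1 + \<bar>k\<bar>) ^ 2"
    by (intro mult_left_mono sq_le) auto
  also have "\<dots> \<le> K" by (rule assms)
  finally show ?thesis using p by (simp add: field_simps)
qed

lemma decay2_integrable: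
  fixes f :: "real \<Rightarrow> complex"
  assumes "continuous_on UNIV f" "\<And>k. norm (f k) * (1 + \<bar>k\<bar>) ^ 2 \<le> K"
  shows "integrable lborel f"
proof (rule Bochner_Integration.integrable_bound[OF integrable_mult_right[OF integrable_inv_sq, of K]])
  show "f \<in> borel_measurable lborel" using assms(1) borel_measurable_continuous_onI by simp
  have "0 \<le> K" using assms(2)[of 0] by (metis mult_nonneg_nonneg norm_ge_zero order_trans zero_le_power2 add_nonneg_nonneg zero_le_one abs_ge_zero)
  then show "AE x in lborel. norm (f x) \<le> norm (K * inverse (1 + x\<^sup>2))"
    using decay2_bound[OF assms(2)] by (auto simp: abs_mult add_nonneg_nonneg)
qed

lemma decay2_lim:
  fixes f :: "real \<Rightarrow> complex"
  assumes "\<And>k. norm (f k) * (1 + \<bar>k\<bar>) ^ 2 \<le> K"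
  shows "(f \<longlongrightarrow> 0) at_top" "(f \<longlongrightarrow> 0) at_bot"
proof -
  have b: "eventually (\<lambda>k. norm (f k) \<le> K * inverse (1 + k^2)) F" for F
    using decay2_bound[OF assms] by (intro always_eventually) auto
  show "(f \<longlongrightarrow> 0) at_top" by (rule Lim_null_comparison[OF b lim_inv_sq(1)])
  show "(f \<longlongrightarrow> 0) at_bot" by (rule Lim_null_comparison[OF b lim_inv_sq(2)])
qed

lemma temp_psi_bound:
  assumes A: "Temp A" and h: "test_fun h"
  shows "\<exists>K. \<forall>t k. norm (A t k * psi h t k) * (1 + \<bar>k\<bar>) ^ 2 \<le> K"
proof -
  obtain C D where CD: "\<And>t k. norm (A t k) \<le> C * ((1 + \<bar>t\<bar>) * (1 + \<bar>k\<bar>)) ^ D"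
    using A Temp_def by blast
  obtain R where R: "R > 0" "supp h R" using test_supp_pos[OF h] by blast
  obtain B where B: "\<And>t k. norm (psi h t k) * (1 + \<bar>k\<bar>) ^ (D + 2) \<le> B"
    using psi_decay[OF h] by blast
  have "norm (A t k * psi h t k) * (1 + \<bar>k\<bar>) ^ 2 \<le> \<bar>C\<bar> * (1 + R) ^ D * \<bar>B\<bar>" for t k
  proof (cases "R < \<bar>t\<bar>")
    case True then show ?thesis using psi_supp[OF R(2) True] R(1) by simp
  next
    case False
    have "norm (A t k * psi h t k) * (1 + \<bar>k\<bar>) ^ 2
        = norm (A t k) * (norm (psi h t k) * (1 + \<bar>k\<bar>) ^ 2)" by (simp add: norm_mult)
    also have "\<dots> \<le> (\<bar>C\<bar> * ((1 + R) * (1 + \<bar>k\<bar>)) ^ D) * (norm (psi h t k) * (1 + \<bar>k\<bar>) ^ 2)"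
    proof (rule mult_right_mono)
      have "C * ((1 + \<bar>t\<bar>) * (1 + \<bar>k\<bar>)) ^ D \<le> \<bar>C\<bar> * ((1 + \<bar>t\<bar>) * (1 + \<bar>k\<bar>)) ^ D"
        by (intro mult_right_mono) auto
      also have "\<dots> \<le> \<bar>C\<bar> * ((1 + R) * (1 + \<bar>k\<bar>)) ^ D"
        using False by (intro mult_left_mono power_mono mult_right_mono) auto
      finally show "norm (A t k) \<le> \<bar>C\<bar> * ((1 + R) * (1 + \<bar>k\<bar>)) ^ D" using CD[of t k] by linarith
    qed auto
    also have "\<dots> = \<bar>C\<bar> * (1 + R) ^ D * (norm (psi h t k) * (1 + \<bar>k\<bar>) ^ (D + 2))"
      by (simp only: power_mult_distrib power_add mult_ac)
    also have "\<dots> \<le> \<bar>C\<bar> * (1 + R) ^ D * \<bar>B\<bar>"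
      using B[of t k] R(1) by (intro mult_left_mono) auto
    finally show ?thesis .
  qed
  then show ?thesis by blast
qed

lemma temp_cont: "Temp A \<Longrightarrow> continuous_on UNIV (\<lambda>p. A (fst p) (snd p))"
  by (simp add: Temp_def)

lemma II_integrable:
  assumes A: "Temp A" and h: "test_fun h"
  shows "integrable (lborel \<Otimes>\<^sub>M lborel) (\<lambda>p. A (fst p) (snd p) * psi h (fst p) (snd p))"
proof -
  obtain K where K: "\<And>t k. norm (A t k * psi h t k) * (1 + \<bar>k\<bar>) ^ 2 \<le> K"
    using temp_psi_bound[OF A h] by blast
  have K0: "0 \<le> K" using K[of 0 0] by (metis mult_nonneg_nonneg norm_ge_zero order_trans zero_le_power abs_ge_zero add_nonneg_nonneg zero_le_one)
  obtain R where R: "R > 0" "supp h R" using test_supp_pos[OF h] by blast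
  define W where "W = (\<lambda>p::real\<times>real. K * indicator {-R..R} (fst p) * inverse (1 + (snd p)^2))"
  have Wm: "W \<in> borel_measurable (lborel \<Otimes>\<^sub>M lborel)" unfolding W_def by measurable
  have iR: "integrable lborel (\<lambda>t::real. indicator {-R..R} t :: real)"
    by (rule integrable_real_indicator) (auto simp: emeasure_lborel_Icc_eq)
  have W: "integrable (lborel \<Otimes>\<^sub>M lborel) W"
  proof (rule lborel_pair.Fubini_integrable[OF Wm])
    have "(\<lambda>t. LINT k|lborel. norm (W (t, k))) = (\<lambda>t. (K * (LINT k|lborel. inverse (1 + k^2))) * indicator {-R..R} t)"
      using K0 by (auto simp: W_def fun_eq_iff abs_mult indicator_def add_nonneg_nonneg)
    then show "integrable lborel (\<lambda>t. LINT k|lborel. norm (W (t, k)))"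
      using integrable_mult_right[OF iR, of "K * (LINT k|lborel. inverse (1 + k^2))"] by (simp add: mult.commute)
    show "AE t in lborel. integrable lborel (\<lambda>k. W (t, k))"
      unfolding W_def using integrable_mult_right[OF integrable_inv_sq] by simp
  qed
  show ?thesis
  proof (rule Bochner_Integration.integrable_bound[OF W])
    have m1: "(\<lambda>p. A (fst p) (snd p)) \<in> borel_measurable borel"
      using temp_cont[OF A] borel_measurable_continuous_onI by blast
    have "(\<lambda>p. A (fst p) (snd p) * psi h (fst p) (snd p)) \<in> borel_measurable borel"
      using m1 psi_meas[OF h] by measurable
    then show "(\<lambda>p. A (fst p) (snd p) * psi h (fst p) (snd p)) \<in> borel_measurable (lborel \<Otimes>\<^sub>M lborel)"
      by (simp add: lborel_prod)
    show "AE p in lborel \<Otimes>\<^sub>M lborel. norm (A (fst p) (snd p) * psi h (fst p) (snd p)) \<le> norm (W p)"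
    proof (rule always_eventually, rule allI)
      fix p :: "real \<times> real"
      obtain t k where p: "p = (t, k)" by fastforce
      show "norm (A (fst p) (snd p) * psi h (fst p) (snd p)) \<le> norm (W p)"
      proof (cases "R < \<bar>t\<bar>")
        case True then show ?thesis using psi_supp[OF R(2) True] p by simp
      next
        case False
        then have "norm (W p) = K * inverse (1 + k^2)"
          using K0 p False by (simp add: W_def indicator_def abs_le_iff abs_mult add_nonneg_nonneg not_less)
        then show ?thesis using decay2_bound[of "\<lambda>k. A t k * psi h t k", OF K] p by simp
      qed
    qed
  qed
qed

lemma II_fst:
  assumes A: "Temp A" and h: "test_fun h"
  shows "II A h = (LINT t|lborel. LINT k|lborel. A t k * psi h t k)"
  unfolding II_def lborel_prod[symmetric]
  using lborel_pair.integral_fst'[OF II_integrable[OF A h]] by simp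

lemma II_snd:
  assumes A: "Temp A" and h: "test_fun h"
  shows "II A h = (LINT k|lborel. LINT t|lborel. A t k * psi h t k)"
proof -
  have i: "integrable (lborel \<Otimes>\<^sub>M lborel) (case_prod (\<lambda>t k. A t k * psi h t k))"
    using II_integrable[OF A h] by (simp add: case_prod_beta')
  show ?thesis
    unfolding II_def lborel_prod[symmetric]
    using lborel_pair.integral_snd[OF i] by (simp add: case_prod_beta')
qed

lemma psi_cont_t: "test_fun h \<Longrightarrow> continuous_on UNIV (\<lambda>t. psi h t k)"
  by (rule continuous_on_vector_derivative) (use psi_dt in \<open>auto intro: has_vector_derivative_at_within\<close>)

lemma psi_cont_k: "test_fun h \<Longrightarrow> continuous_on UNIV (\<lambda>k. psi h t k)"
  by (rule continuous_on_vector_derivative) (use psi_dk in \<open>auto intro: has_vector_derivative_at_within\<close>)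

lemma ev_zero_top: "(\<And>x. R < \<bar>x\<bar> \<Longrightarrow> f x = 0) \<Longrightarrow> ((f::real\<Rightarrow>complex) \<longlongrightarrow> 0) at_top"
  by (rule tendsto_eventually) (auto simp: eventually_at_top_linorder intro!: exI[of _ "\<bar>R\<bar>+1"])

lemma ev_zero_bot: "(\<And>x. R < \<bar>x\<bar> \<Longrightarrow> f x = 0) \<Longrightarrow> ((f::real\<Rightarrow>complex) \<longlongrightarrow> 0) at_bot"
  by (rule tendsto_eventually) (auto simp: eventually_at_bot_linorder intro!: exI[of _ "-\<bar>R\<bar>-1"])

lemma II_ibp_t:
  assumes A: "Temp A" and At: "Temp At"
    and dA: "\<And>t k. ((\<lambda>t. A t k) has_vector_derivative At t k) (at t)"
    and h: "test_fun h"
  shows "II A (dT h) = - II At h"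
proof -
  obtain R where R: "supp h R" using h test_fun_iff by blast
  have R2: "supp (dT h) R" using supp_dT[OF R] .
  have h2: "test_fun (dT h)" using test_dT[OF h] .
  have inner: "(LINT t|lborel. A t k * psi (dT h) t k) = - (LINT t|lborel. At t k * psi h t k)" for k
  proof (rule ibp_R)
    show "((\<lambda>t. A t k) has_vector_derivative At t k) (at t)" for t by (rule dA)
    show "((\<lambda>t. psi h t k) has_vector_derivative psi (dT h) t k) (at t)" for t by (rule psi_dt[OF h])
    show "continuous_on UNIV (\<lambda>t. At t k)" by (rule cont_t[OF temp_cont[OF At]])
    show "continuous_on UNIV (\<lambda>t. psi (dT h) t k)" by (rule psi_cont_t[OF h2])
    show "integrable lborel (\<lambda>t. A t k * psi (dT h) t k)"
      by (rule integrable_cs[where R=R]) (auto intro!: continuous_intros cont_t[OF temp_cont[OF A]] psi_cont_t[OF h2] simp: psi_supp[OF R2])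
    show "integrable lborel (\<lambda>t. At t k * psi h t k)"
      by (rule integrable_cs[where R=R]) (auto intro!: continuous_intros cont_t[OF temp_cont[OF At]] psi_cont_t[OF h] simp: psi_supp[OF R])
    show "((\<lambda>t. A t k * psi h t k) \<longlongrightarrow> 0) at_top"
      by (rule ev_zero_top[where R=R]) (simp add: psi_supp[OF R])
    show "((\<lambda>t. A t k * psi h t k) \<longlongrightarrow> 0) at_bot"
      by (rule ev_zero_bot[where R=R]) (simp add: psi_supp[OF R])
  qed
  show ?thesis
    unfolding II_snd[OF A h2] II_snd[OF At h] inner by simp
qed

lemma II_ibp_k:
  assumes A: "Temp A" and Ak: "Temp Ak"
    and dA: "\<And>t k. ((\<lambda>k. A t k) has_vector_derivative Ak t k) (at k)"
    and h: "test_fun h"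
  shows "II A (xm \<i> h) = - II Ak h"
proof -
  have h2: "test_fun (xm \<i> h)" using test_xm[OF h] .
  obtain K1 where K1: "\<And>t k. norm (A t k * psi (xm \<i> h) t k) * (1 + \<bar>k\<bar>) ^ 2 \<le> K1"
    using temp_psi_bound[OF A h2] by blast
  obtain K2 where K2: "\<And>t k. norm (Ak t k * psi h t k) * (1 + \<bar>k\<bar>) ^ 2 \<le> K2"
    using temp_psi_bound[OF Ak h] by blast
  obtain K3 where K3: "\<And>t k. norm (A t k * psi h t k) * (1 + \<bar>k\<bar>) ^ 2 \<le> K3"
    using temp_psi_bound[OF A h] by blast
  have inner: "(LINT k|lborel. A t k * psi (xm \<i> h) t k) = - (LINT k|lborel. Ak t k * psi h t k)" for t
  proof (rule ibp_R)
    show "((\<lambda>k. A t k) has_vector_derivative Ak t k) (at k)" for k by (rule dA)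
    show "((\<lambda>k. psi h t k) has_vector_derivative psi (xm \<i> h) t k) (at k)" for k by (rule psi_dk[OF h])
    show "continuous_on UNIV (\<lambda>k. Ak t k)" by (rule cont_x[OF temp_cont[OF Ak]])
    show "continuous_on UNIV (\<lambda>k. psi (xm \<i> h) t k)" by (rule psi_cont_k[OF h2])
    show "integrable lborel (\<lambda>k. A t k * psi (xm \<i> h) t k)"
      by (rule decay2_integrable[OF _ K1]) (auto intro!: continuous_intros cont_x[OF temp_cont[OF A]] psi_cont_k[OF h2])
    show "integrable lborel (\<lambda>k. Ak t k * psi h t k)"
      by (rule decay2_integrable[OF _ K2]) (auto intro!: continuous_intros cont_x[OF temp_cont[OF Ak]] psi_cont_k[OF h])
    show "((\<lambda>k. A t k * psi h t k) \<longlongrightarrow> 0) at_top" by (rule decay2_lim(1)[OF K3])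
    show "((\<lambda>k. A t k * psi h t k) \<longlongrightarrow> 0) at_bot" by (rule decay2_lim(2)[OF K3])
  qed
  show ?thesis
    unfolding II_fst[OF A h2] II_fst[OF Ak h] inner by simp
qed

lemma Temp_const: "Temp (\<lambda>t k. c)"
  unfolding Temp_def by (intro conjI exI[of _ "norm c"] exI[of _ "0::nat"] allI) (auto intro: continuous_intros)

lemma Temp_t: "Temp (\<lambda>t k. of_real t)"
  unfolding Temp_def
proof (intro conjI exI allI)
  show "continuous_on UNIV (\<lambda>p. complex_of_real (fst p))" by (intro continuous_intros)
  fix t k :: real
  have "\<bar>t\<bar> \<le> (1 + \<bar>t\<bar>) * (1 + \<bar>k\<bar>)" by (simp add: algebra_simps)
  then show "norm (complex_of_real t) \<le> 1 * ((1 + \<bar>t\<bar>) * (1 + \<bar>k\<bar>)) ^ 1" by simp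
qed

lemma Temp_k: "Temp (\<lambda>t k. of_real k)"
  unfolding Temp_def
proof (intro conjI exI allI)
  show "continuous_on UNIV (\<lambda>p. complex_of_real (snd p))" by (intro continuous_intros)
  fix t k :: real
  have "\<bar>k\<bar> \<le> (1 + \<bar>t\<bar>) * (1 + \<bar>k\<bar>)" by (simp add: algebra_simps)
  then show "norm (complex_of_real k) \<le> 1 * ((1 + \<bar>t\<bar>) * (1 + \<bar>k\<bar>)) ^ 1" by simp
qed

lemma X_ge1: "1 \<le> (1 + \<bar>t\<bar>) * (1 + \<bar>k::real\<bar>)"
proof -
  have "0 \<le> \<bar>t\<bar> * \<bar>k\<bar>" by simp
  then show ?thesis by (simp add: algebra_simps)
qed

lemma Temp_mult:
  assumes "Temp A" "Temp B"
  shows "Temp (\<lambda>t k. A t k * B t k)"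
proof -
  obtain C1 D1 where 1: "\<And>t k. norm (A t k) \<le> C1 * ((1 + \<bar>t\<bar>) * (1 + \<bar>k\<bar>)) ^ D1"
    using assms(1) Temp_def by blast
  obtain C2 D2 where 2: "\<And>t k. norm (B t k) \<le> C2 * ((1 + \<bar>t\<bar>) * (1 + \<bar>k\<bar>)) ^ D2"
    using assms(2) Temp_def by blast
  have "norm (A t k * B t k) \<le> (C1 * C2) * ((1 + \<bar>t\<bar>) * (1 + \<bar>k\<bar>)) ^ (D1 + D2)" for t k
  proof -
    have "norm (A t k * B t k) \<le> (C1 * ((1 + \<bar>t\<bar>) * (1 + \<bar>k\<bar>)) ^ D1) * (C2 * ((1 + \<bar>t\<bar>) * (1 + \<bar>k\<bar>)) ^ D2)"
      unfolding norm_mult by (intro mult_mono 1 2) (auto intro: order_trans[OF norm_ge_zero 1])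
    then show ?thesis by (simp add: power_add mult_ac)
  qed
  moreover have "continuous_on UNIV (\<lambda>p. A (fst p) (snd p) * B (fst p) (snd p))"
    using assms by (auto simp: Temp_def intro!: continuous_intros)
  ultimately show ?thesis unfolding Temp_def by blast
qed

lemma Temp_add:
  assumes "Temp A" "Temp B"
  shows "Temp (\<lambda>t k. A t k + B t k)"
proof -
  obtain C1 D1 where 1: "\<And>t k. norm (A t k) \<le> C1 * ((1 + \<bar>t\<bar>) * (1 + \<bar>k\<bar>)) ^ D1"
    using assms(1) Temp_def by blast
  obtain C2 D2 where 2: "\<And>t k. norm (B t k) \<le> C2 * ((1 + \<bar>t\<bar>) * (1 + \<bar>k\<bar>)) ^ D2"
    using assms(2) Temp_def by blast
  have "norm (A t k + B t k) \<le> (\<bar>C1\<bar> + \<bar>C2\<bar>) * ((1 + \<bar>t\<bar>) * (1 + \<bar>k\<bar>)) ^ (D1 + D2)" for t k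
  proof -
    let ?X = "(1 + \<bar>t\<bar>) * (1 + \<bar>k\<bar>)"
    have X: "1 \<le> ?X" by (rule X_ge1)
    have p1: "?X ^ D1 \<le> ?X ^ (D1 + D2)" "?X ^ D2 \<le> ?X ^ (D1 + D2)"
      using X by (auto intro!: power_increasing)
    have "C1 * ?X ^ D1 \<le> \<bar>C1\<bar> * ?X ^ D1" using X by (intro mult_right_mono) auto
    also have "\<dots> \<le> \<bar>C1\<bar> * ?X ^ (D1 + D2)" using p1 by (intro mult_left_mono) auto
    finally have a: "norm (A t k) \<le> \<bar>C1\<bar> * ?X ^ (D1 + D2)" using 1[of t k] by linarith
    have "C2 * ?X ^ D2 \<le> \<bar>C2\<bar> * ?X ^ D2" using X by (intro mult_right_mono) auto
    also have "\<dots> \<le> \<bar>C2\<bar> * ?X ^ (D1 + D2)" using p1 by (intro mult_left_mono) auto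
    finally have b: "norm (B t k) \<le> \<bar>C2\<bar> * ?X ^ (D1 + D2)" using 2[of t k] by linarith
    show ?thesis using norm_triangle_ineq[of "A t k" "B t k"] a b by (simp add: algebra_simps)
  qed
  moreover have "continuous_on UNIV (\<lambda>p. A (fst p) (snd p) + B (fst p) (snd p))"
    using assms by (auto simp: Temp_def intro!: continuous_intros)
  ultimately show ?thesis unfolding Temp_def by blast
qed

definition DT :: "complex \<Rightarrow> real \<Rightarrow> fn2 \<Rightarrow> fn2" where
  "DT s E \<phi> = (\<lambda>t x. (1/2) * ( - (dT (dT \<phi>) t x - dX (dX \<phi>) t x)
       + s * 2 * \<i> * of_real E * (dT (\<lambda>t' x'. of_real x' * \<phi> t' x') t x
                               + dX (\<lambda>t' x'. of_real t' * \<phi> t' x') t x)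
       - of_real (E^2 * (t^2 - x^2)) * \<phi> t x))"

lemma Dsq_T_DT: "Dsq_T E \<phi> = DT 1 E \<phi>"
  by (simp add: Dsq_T_def DT_def)
lemma Dtsq_T_DT: "Dtsq_T E \<phi> = DT (-1) E \<phi>"
  by (simp add: Dtsq_T_def DT_def)

lemma DT_expand:
  assumes h: "test_fun \<phi>"
  shows "DT s E \<phi> t x = (1/2) * (- dT (dT \<phi>) t x + dX (dX \<phi>) t x + 2 * s * of_real E * xm \<i> (dT \<phi>) t x
     + 2 * \<i> * s * of_real E * of_real t * dX \<phi> t x - of_real (E^2 * t^2) * \<phi> t x
     - of_real (E^2) * xm \<i> (xm \<i> \<phi>) t x)"
proof -
  have sm: "smooth2 \<phi>" using h test_fun_iff by blast
  have d1: "dT (\<lambda>t' x'. of_real x' * \<phi> t' x') t x = of_real x * dT \<phi> t x"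
    unfolding dT_def
    by (rule vector_derivative_at) (use smooth2_D(1)[OF sm, of "[]" x t] in \<open>auto intro!: derivative_eq_intros simp: dT_def\<close>)
  have d2: "dX (\<lambda>t' x'. of_real t' * \<phi> t' x') t x = of_real t * dX \<phi> t x"
    unfolding dX_def
    by (rule vector_derivative_at) (use smooth2_D(2)[OF sm, of "[]" t x] in \<open>auto intro!: derivative_eq_intros simp: dX_def\<close>)
  show ?thesis
  proof -
    have e1: "xm \<i> (dT \<phi>) t x = \<i> * of_real x * dT \<phi> t x" by (simp add: xm_def)
    have ii: "\<i> * \<i> = (-1::complex)" by simp
    have e2: "xm \<i> (xm \<i> \<phi>) t x = - (of_real x * of_real x) * \<phi> t x"
      unfolding xm_def using ii by algebra
    show ?thesis
      unfolding DT_def d1 d2 e1 e2 of_real_mult of_real_diff of_real_power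
      by algebra
  qed
qed

lemma hbi: "test_fun h \<Longrightarrow> has_bochner_integral lborel (\<lambda>x. exp (\<i> * of_real (k * x)) * h t x) (psi h t k)"
  unfolding psi_def using psi_integrable has_bochner_integral_integrable by blast

lemma psi_DT:
  assumes h: "test_fun \<phi>"
  shows "psi (DT s E \<phi>) t k = (-1/2) * psi (dT (dT \<phi>)) t k + (s * of_real E) * psi (xm \<i> (dT \<phi>)) t k
     + (- of_real (E^2) / 2) * psi (xm \<i> (xm \<i> \<phi>)) t k
     + (1/2) * (- of_real (k^2) + 2 * s * of_real E * of_real t * of_real k - of_real (E^2 * t^2)) * psi \<phi> t k"
proof -
  let ?e = "\<lambda>x. exp (\<i> * of_real (k * x))"
  have t1: "test_fun (dT (dT \<phi>))" "test_fun (dX (dX \<phi>))" "test_fun (xm \<i> (dT \<phi>))"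
    "test_fun (dX \<phi>)" "test_fun (xm \<i> (xm \<i> \<phi>))"
    using h by (auto intro!: test_dT test_dX test_xm)
  have H: "has_bochner_integral lborel (\<lambda>x. (-1/2) * (?e x * dT (dT \<phi>) t x) + (1/2) * (?e x * dX (dX \<phi>) t x)
       + (s * of_real E) * (?e x * xm \<i> (dT \<phi>) t x) + (\<i> * s * of_real E * of_real t) * (?e x * dX \<phi> t x)
       + (- of_real (E^2 * t^2) / 2) * (?e x * \<phi> t x) + (- of_real (E^2) / 2) * (?e x * xm \<i> (xm \<i> \<phi>) t x))
     ((-1/2) * psi (dT (dT \<phi>)) t k + (1/2) * psi (dX (dX \<phi>)) t k
       + (s * of_real E) * psi (xm \<i> (dT \<phi>)) t k + (\<i> * s * of_real E * of_real t) * psi (dX \<phi>) t k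
       + (- of_real (E^2 * t^2) / 2) * psi \<phi> t k + (- of_real (E^2) / 2) * psi (xm \<i> (xm \<i> \<phi>)) t k)"
    by (intro has_bochner_integral_add has_bochner_integral_mult_right hbi t1 h)
  have eq: "(\<lambda>x. ?e x * DT s E \<phi> t x) = (\<lambda>x. (-1/2) * (?e x * dT (dT \<phi>) t x) + (1/2) * (?e x * dX (dX \<phi>) t x)
       + (s * of_real E) * (?e x * xm \<i> (dT \<phi>) t x) + (\<i> * s * of_real E * of_real t) * (?e x * dX \<phi> t x)
       + (- of_real (E^2 * t^2) / 2) * (?e x * \<phi> t x) + (- of_real (E^2) / 2) * (?e x * xm \<i> (xm \<i> \<phi>) t x))"
    unfolding DT_expand[OF h] by (rule ext) (simp add: algebra_simps)
  have p2: "psi (dX (dX \<phi>)) t k = - of_real (k^2) * psi \<phi> t k"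
  proof -
    have ii: "\<i> * a * (\<i> * b * c) = - (a * b * c)" for a b c :: complex
    proof -
      have "\<i> * a * (\<i> * b * c) = (\<i> * \<i>) * (a * b * c)" by (simp only: mult_ac)
      also have "\<dots> = - (a * b * c)" by simp
      finally show ?thesis .
    qed
    show ?thesis using psi_dX[OF test_dX[OF h], of t k] psi_dX[OF h, of t k]
      by (simp add: power2_eq_square ii)
  qed
  have p4: "psi (dX \<phi>) t k = - \<i> * of_real k * psi \<phi> t k"
    using psi_dX[OF h] .
  have "psi (DT s E \<phi>) t k = (-1/2) * psi (dT (dT \<phi>)) t k + (1/2) * psi (dX (dX \<phi>)) t k
       + (s * of_real E) * psi (xm \<i> (dT \<phi>)) t k + (\<i> * s * of_real E * of_real t) * psi (dX \<phi>) t k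
       + (- of_real (E^2 * t^2) / 2) * psi \<phi> t k + (- of_real (E^2) / 2) * psi (xm \<i> (xm \<i> \<phi>)) t k"
    unfolding psi_def[of "DT s E \<phi>"] eq by (rule has_bochner_integral_integral_eq[OF H])
  also have "\<dots> = (-1/2) * psi (dT (dT \<phi>)) t k + (s * of_real E) * psi (xm \<i> (dT \<phi>)) t k
     + (- of_real (E^2) / 2) * psi (xm \<i> (xm \<i> \<phi>)) t k
     + (1/2) * (- of_real (k^2) + 2 * s * of_real E * of_real t * of_real k - of_real (E^2 * t^2)) * psi \<phi> t k"
    unfolding p2 p4 by (simp add: algebra_simps)
  finally show ?thesis .
qed

lemma II_integrable':
  "Temp A \<Longrightarrow> test_fun h \<Longrightarrow> integrable lborel (\<lambda>p. A (fst p) (snd p) * psi h (fst p) (snd p))"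
  using II_integrable[of A h] by (simp add: lborel_prod)

lemma II_pw4:
  assumes "Temp B1" "Temp B2" "Temp B3" "Temp B4"
    "test_fun h1" "test_fun h2" "test_fun h3" "test_fun h4"
    "\<And>t k. A t k * psi h t k = B1 t k * psi h1 t k + B2 t k * psi h2 t k + B3 t k * psi h3 t k + B4 t k * psi h4 t k"
  shows "II A h = II B1 h1 + II B2 h2 + II B3 h3 + II B4 h4"
  unfolding II_def assms(9)
  by (simp add: Bochner_Integration.integral_add II_integrable' assms)

lemma II_cmult: "II (\<lambda>t k. c * A t k) h = c * II A h"
  unfolding II_def by (simp add: mult.assoc)

lemma Temp_cmult: "Temp A \<Longrightarrow> Temp (\<lambda>t k. c * A t k)"
  using Temp_mult[OF Temp_const] .

lemma Temp_minus: "Temp A \<Longrightarrow> Temp (\<lambda>t k. - A t k)"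
  using Temp_cmult[of A "-1"] by simp

lemma Temp_diff: "Temp A \<Longrightarrow> Temp B \<Longrightarrow> Temp (\<lambda>t k. A t k - B t k)"
  using Temp_add[OF _ Temp_minus[of B], of A] by simp

theorem E_main:
  assumes F: "Temp F" and Ft: "Temp Ft" and Fk: "Temp Fk" and Ftt: "Temp Ftt" and Fkt: "Temp Fkt" and Fkk: "Temp Fkk"
    and dFt: "\<And>t k. ((\<lambda>t. F t k) has_vector_derivative Ft t k) (at t)"
    and dFtt: "\<And>t k. ((\<lambda>t. Ft t k) has_vector_derivative Ftt t k) (at t)"
    and dFk: "\<And>t k. ((\<lambda>k. F t k) has_vector_derivative Fk t k) (at k)"
    and dFkt: "\<And>t k. ((\<lambda>t. Fk t k) has_vector_derivative Fkt t k) (at t)"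
    and dFkk: "\<And>t k. ((\<lambda>k. Fk t k) has_vector_derivative Fkk t k) (at k)"
    and h: "test_fun \<phi>"
    and ev: "\<And>t k. (-1/2) * Ftt t k + (s * of_real E) * Fkt t k + (- of_real (E^2) / 2) * Fkk t k
       + (1/2) * (- of_real (k^2) + 2 * s * of_real E * of_real t * of_real k - of_real (E^2 * t^2)) * F t k
       = lam * F t k"
  shows "II F (DT s E \<phi>) = lam * II F \<phi>"
proof -
  let ?P = "\<lambda>t k. (1/2) * (- of_real (k^2) + 2 * s * of_real E * of_real t * of_real k - of_real (E^2 * t^2)) * F t k"
  have TP: "Temp ?P"
  proof -
    have "?P = (\<lambda>t k. (1/2) * (- (of_real k * of_real k) + 2 * s * of_real E * of_real t * of_real k
        - of_real E * of_real E * (of_real t * of_real t)) * F t k)"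
      by (simp add: power2_eq_square fun_eq_iff)
    moreover have "Temp (\<lambda>t k. (1/2) * (- (of_real k * of_real k) + 2 * s * of_real E * of_real t * of_real k
        - of_real E * of_real E * (of_real t * of_real t)) * F t k)"
      by (intro Temp_mult Temp_add Temp_diff Temp_minus Temp_const F Temp_t Temp_k)
    ultimately show ?thesis by simp
  qed
  have e1: "II F (DT s E \<phi>) = II (\<lambda>t k. (-1/2) * F t k) (dT (dT \<phi>)) + II (\<lambda>t k. (s * of_real E) * F t k) (xm \<i> (dT \<phi>))
      + II (\<lambda>t k. (- of_real (E^2) / 2) * F t k) (xm \<i> (xm \<i> \<phi>)) + II ?P \<phi>"
  proof (rule II_pw4)
    fix t k
    show "F t k * psi (DT s E \<phi>) t k = (-1/2) * F t k * psi (dT (dT \<phi>)) t k + (s * of_real E) * F t k * psi (xm \<i> (dT \<phi>)) t k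
      + (- of_real (E^2) / 2) * F t k * psi (xm \<i> (xm \<i> \<phi>)) t k + ?P t k * psi \<phi> t k"
      unfolding psi_DT[OF h] by (simp add: algebra_simps)
  qed (rule Temp_cmult F TP test_dT test_xm h)+
  have i1: "II F (dT (dT \<phi>)) = II Ftt \<phi>"
    using II_ibp_t[OF F Ft dFt test_dT[OF h]] II_ibp_t[OF Ft Ftt dFtt h] by simp
  have i3: "II F (xm \<i> (dT \<phi>)) = II Fkt \<phi>"
    using II_ibp_k[OF F Fk dFk test_dT[OF h]] II_ibp_t[OF Fk Fkt dFkt h] by simp
  have i6: "II F (xm \<i> (xm \<i> \<phi>)) = II Fkk \<phi>"
    using II_ibp_k[OF F Fk dFk test_xm[OF h]] II_ibp_k[OF Fk Fkk dFkk h] by simp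
  have e2: "II (\<lambda>t k. lam * F t k) \<phi> = II (\<lambda>t k. (-1/2) * Ftt t k) \<phi> + II (\<lambda>t k. (s * of_real E) * Fkt t k) \<phi>
      + II (\<lambda>t k. (- of_real (E^2) / 2) * Fkk t k) \<phi> + II ?P \<phi>"
  proof (rule II_pw4)
    fix t k
    show "lam * F t k * psi \<phi> t k = (-1/2) * Ftt t k * psi \<phi> t k + (s * of_real E) * Fkt t k * psi \<phi> t k
      + (- of_real (E^2) / 2) * Fkk t k * psi \<phi> t k + ?P t k * psi \<phi> t k"
      unfolding ev[symmetric] by (simp add: algebra_simps)
  qed (rule Temp_cmult Ftt Fkt Fkk TP h)+
  show ?thesis
    unfolding e1 II_cmult i1 i3 i6
    using e2 unfolding II_cmult by simp
qed

definition P1 :: "(real \<Rightarrow> complex) \<Rightarrow> bool" where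
  "P1 f \<longleftrightarrow> continuous_on UNIV f \<and> (\<exists>C D. \<forall>q. norm (f q) \<le> C * (1 + \<bar>q\<bar>) ^ D)"

lemma P1_const: "P1 (\<lambda>q. c)"
  unfolding P1_def by (intro conjI exI[of _ "norm c"] exI[of _ "0::nat"] allI) (auto intro: continuous_intros)

lemma P1_id: "P1 (\<lambda>q. of_real q)"
  unfolding P1_def by (intro conjI exI[of _ "1"] exI[of _ "1::nat"] allI) (auto intro: continuous_intros)

lemma P1_mult:
  assumes "P1 f" "P1 g" shows "P1 (\<lambda>q. f q * g q)"
proof -
  obtain C1 D1 where 1: "\<And>q. norm (f q) \<le> C1 * (1 + \<bar>q\<bar>) ^ D1" using assms(1) P1_def by blast
  obtain C2 D2 where 2: "\<And>q. norm (g q) \<le> C2 * (1 + \<bar>q\<bar>) ^ D2" using assms(2) P1_def by blast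
  have "norm (f q * g q) \<le> (C1 * C2) * (1 + \<bar>q\<bar>) ^ (D1 + D2)" for q
  proof -
    have "norm (f q * g q) \<le> (C1 * (1 + \<bar>q\<bar>) ^ D1) * (C2 * (1 + \<bar>q\<bar>) ^ D2)"
      unfolding norm_mult by (intro mult_mono 1 2) (auto intro: order_trans[OF norm_ge_zero 1])
    then show ?thesis by (simp add: power_add mult_ac)
  qed
  moreover have "continuous_on UNIV (\<lambda>q. f q * g q)" using assms by (auto simp: P1_def intro!: continuous_intros)
  ultimately show ?thesis unfolding P1_def by blast
qed

lemma P1_add:
  assumes "P1 f" "P1 g" shows "P1 (\<lambda>q. f q + g q)"
proof -
  obtain C1 D1 where 1: "\<And>q. norm (f q) \<le> C1 * (1 + \<bar>q\<bar>) ^ D1" using assms(1) P1_def by blast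
  obtain C2 D2 where 2: "\<And>q. norm (g q) \<le> C2 * (1 + \<bar>q\<bar>) ^ D2" using assms(2) P1_def by blast
  have "norm (f q + g q) \<le> (\<bar>C1\<bar> + \<bar>C2\<bar>) * (1 + \<bar>q\<bar>) ^ (D1 + D2)" for q
  proof -
    let ?X = "1 + \<bar>q\<bar>"
    have X: "1 \<le> ?X" by simp
    have p1: "?X ^ D1 \<le> ?X ^ (D1 + D2)" "?X ^ D2 \<le> ?X ^ (D1 + D2)"
      using X by (auto intro!: power_increasing)
    have "C1 * ?X ^ D1 \<le> \<bar>C1\<bar> * ?X ^ D1" by (intro mult_right_mono) auto
    also have "\<dots> \<le> \<bar>C1\<bar> * ?X ^ (D1 + D2)" using p1 by (intro mult_left_mono) auto
    finally have a: "norm (f q) \<le> \<bar>C1\<bar> * ?X ^ (D1 + D2)" using 1[of q] by linarith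
    have "C2 * ?X ^ D2 \<le> \<bar>C2\<bar> * ?X ^ D2" by (intro mult_right_mono) auto
    also have "\<dots> \<le> \<bar>C2\<bar> * ?X ^ (D1 + D2)" using p1 by (intro mult_left_mono) auto
    finally have b: "norm (g q) \<le> \<bar>C2\<bar> * ?X ^ (D1 + D2)" using 2[of q] by linarith
    show ?thesis using norm_triangle_ineq[of "f q" "g q"] a b by (simp add: algebra_simps)
  qed
  moreover have "continuous_on UNIV (\<lambda>q. f q + g q)" using assms by (auto simp: P1_def intro!: continuous_intros)
  ultimately show ?thesis unfolding P1_def by blast
qed

lemma P1_cnj: "P1 f \<Longrightarrow> P1 (\<lambda>q. cnj (f q))"
  unfolding P1_def by (auto intro!: continuous_intros)

lemma hermite_bound: "\<exists>C. \<forall>z. norm (hermite n z) \<le> C * (1 + norm z) ^ n"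
proof (induction n rule: less_induct)
  case (less n)
  show ?case
  proof (cases n)
    case 0 then show ?thesis by (auto intro!: exI[of _ 1])
  next
    case (Suc n1)
    show ?thesis
    proof (cases n1)
      case 0 then show ?thesis using Suc by (auto intro!: exI[of _ 2] simp: norm_mult)
    next
      case (Suc n2)
      obtain C1 where C1: "\<And>z. norm (hermite (Suc n2) z) \<le> C1 * (1 + norm z) ^ (Suc n2)"
        using less[of "Suc n2"] \<open>n = Suc n1\<close> Suc by auto
      obtain C0 where C0: "\<And>z. norm (hermite n2 z) \<le> C0 * (1 + norm z) ^ n2"
        using less[of n2] \<open>n = Suc n1\<close> Suc by auto
      have "norm (hermite n z) \<le> (2 * \<bar>C1\<bar> + 2 * (real n2 + 1) * \<bar>C0\<bar>) * (1 + norm z) ^ n" for z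
      proof -
        let ?X = "1 + norm z"
        have X: "1 \<le> ?X" "norm z \<le> ?X" by auto
        have "norm (hermite n z) \<le> norm (2 * z * hermite (Suc n2) z) + norm (2 * of_nat (Suc n2) * hermite n2 z)"
          using \<open>n = Suc n1\<close> Suc norm_triangle_ineq4 by simp
        also have "norm (2 * z * hermite (Suc n2) z) \<le> 2 * ?X * (\<bar>C1\<bar> * ?X ^ Suc n2)"
          unfolding norm_mult using C1[of z] X
          by (intro mult_mono) (auto intro: order_trans[OF _ mult_right_mono[OF abs_ge_self]])
        also have "norm (2 * of_nat (Suc n2) * hermite n2 z) \<le> 2 * (real n2 + 1) * (\<bar>C0\<bar> * ?X ^ Suc (Suc n2))"
        proof -
          have "norm (hermite n2 z) \<le> \<bar>C0\<bar> * ?X ^ Suc (Suc n2)"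
          proof -
            have "C0 * ?X ^ n2 \<le> \<bar>C0\<bar> * ?X ^ n2" by (intro mult_right_mono) auto
            also have "\<dots> \<le> \<bar>C0\<bar> * ?X ^ Suc (Suc n2)" using X by (intro mult_left_mono power_increasing) auto
            finally show ?thesis using C0[of z] by linarith
          qed
          moreover have "norm (2 * of_nat (Suc n2) * hermite n2 z) = 2 * (real n2 + 1) * norm (hermite n2 z)"
            by (simp only: norm_mult norm_numeral norm_of_nat) simp
          ultimately show ?thesis by (auto intro!: mult_left_mono)
        qed
        finally show ?thesis using \<open>n = Suc n1\<close> Suc by (simp add: algebra_simps)
      qed
      then show ?thesis by blast
    qed
  qed
qed

lemma hermite_cont: "continuous_on UNIV (\<lambda>q::real. hermite n (s * of_real q))"
proof -
  have "isCont (hermite n) z" for z using DERIV_isCont[OF hermite_deriv] .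
  then show ?thesis
    by (intro continuous_at_imp_continuous_on ballI continuous_intros isCont_o2[where f="\<lambda>q. s * of_real q"]) auto
qed

lemma P1_hermite: "P1 (\<lambda>q. hermite n (s * of_real q))"
proof -
  obtain C where C: "\<And>z. norm (hermite n z) \<le> C * (1 + norm z) ^ n" using hermite_bound by blast
  have "norm (hermite n (s * of_real q)) \<le> (\<bar>C\<bar> * (1 + norm s) ^ n) * (1 + \<bar>q\<bar>) ^ n" for q
  proof -
    have "1 + norm (s * of_real q) \<le> (1 + norm s) * (1 + \<bar>q\<bar>)"
      by (simp add: norm_mult algebra_simps)
    then have "(1 + norm (s * of_real q)) ^ n \<le> ((1 + norm s) * (1 + \<bar>q\<bar>)) ^ n"
      by (intro power_mono) auto
    then have "C * (1 + norm (s * of_real q)) ^ n \<le> \<bar>C\<bar> * ((1 + norm s) * (1 + \<bar>q\<bar>)) ^ n"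
      by (meson abs_ge_self abs_ge_zero mult_mono order_trans zero_le_power add_nonneg_nonneg zero_le_one norm_ge_zero)
    then show ?thesis using C[of "s * of_real q"] by (simp add: power_mult_distrib mult_ac)
  qed
  then show ?thesis unfolding P1_def using hermite_cont by blast
qed

lemma P1_expi:
  assumes "Re a = 0"
  shows "P1 (\<lambda>q. exp (-(a * (of_real q)^2 / 2)))"
proof -
  have nrm: "norm (exp (-(a * (of_real q)^2 / 2))) = 1" for q :: real
  proof -
    have "Re (-(a * (of_real q)^2 / 2)) = 0" using assms
      by (simp add: power2_eq_square)
    then show ?thesis by (simp add: norm_exp_eq_Re)
  qed
  have "\<forall>q. norm (exp (-(a * (of_real q)^2 / 2))) \<le> 1 * (1 + \<bar>q\<bar>) ^ 0" using nrm by (simp del: norm_exp_eq_Re)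
  moreover have "continuous_on UNIV (\<lambda>q. exp (-(a * (of_real q)^2 / 2)))" by (intro continuous_intros) auto
  ultimately show ?thesis unfolding P1_def by blast
qed

lemma Temp_comp:
  assumes "P1 f" shows "Temp (\<lambda>t k. f (t + b * k))"
proof -
  obtain C D where C: "\<And>q. norm (f q) \<le> C * (1 + \<bar>q\<bar>) ^ D" using assms P1_def by blast
  have "norm (f (t + b * k)) \<le> (\<bar>C\<bar> * (1 + \<bar>b\<bar>) ^ D) * ((1 + \<bar>t\<bar>) * (1 + \<bar>k\<bar>)) ^ D" for t k
  proof -
    have "1 + \<bar>t + b * k\<bar> \<le> (1 + \<bar>b\<bar>) * ((1 + \<bar>t\<bar>) * (1 + \<bar>k\<bar>))"
    proof -
      have "\<bar>t + b * k\<bar> \<le> \<bar>t\<bar> + \<bar>b\<bar> * \<bar>k\<bar>" by (metis abs_mult abs_triangle_ineq)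
      moreover have "(1 + \<bar>b\<bar>) * ((1 + \<bar>t\<bar>) * (1 + \<bar>k\<bar>)) = 1 + \<bar>t\<bar> + \<bar>b\<bar> * \<bar>k\<bar>
          + (\<bar>b\<bar> + \<bar>k\<bar> + \<bar>b\<bar> * \<bar>t\<bar> + \<bar>t\<bar> * \<bar>k\<bar> + \<bar>b\<bar> * \<bar>t\<bar> * \<bar>k\<bar>)"
        by (simp add: algebra_simps)
      moreover have "0 \<le> \<bar>b\<bar> + \<bar>k\<bar> + \<bar>b\<bar> * \<bar>t\<bar> + \<bar>t\<bar> * \<bar>k\<bar> + \<bar>b\<bar> * \<bar>t\<bar> * \<bar>k\<bar>" by simp
      ultimately show ?thesis by linarith
    qed
    then have "(1 + \<bar>t + b * k\<bar>) ^ D \<le> ((1 + \<bar>b\<bar>) * ((1 + \<bar>t\<bar>) * (1 + \<bar>k\<bar>))) ^ D"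
      by (intro power_mono) auto
    then have "C * (1 + \<bar>t + b * k\<bar>) ^ D \<le> \<bar>C\<bar> * ((1 + \<bar>b\<bar>) * ((1 + \<bar>t\<bar>) * (1 + \<bar>k\<bar>))) ^ D"
      by (meson abs_ge_self abs_ge_zero mult_mono order_trans zero_le_power add_nonneg_nonneg zero_le_one)
    then show ?thesis using C[of "t + b * k"] by (simp add: power_mult_distrib mult_ac)
  qed
  moreover have "continuous_on UNIV (\<lambda>p. f (fst p + b * snd p))"
    using assms unfolding P1_def
    by (intro continuous_on_compose2[where f="\<lambda>p. fst p + b * snd p" and g=f]) (auto intro!: continuous_intros)
  ultimately show ?thesis unfolding Temp_def by blast
qed

lemma dcomp:
  assumes f: "\<And>q. (f has_vector_derivative f' q) (at q)" and p: "(p has_real_derivative p') (at x)"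
  shows "((\<lambda>x. f (p x)) has_vector_derivative (of_real p' * f' (p x))) (at x)"
proof -
  have "(p has_vector_derivative p') (at x)" using p has_real_derivative_iff_has_vector_derivative by blast
  from vector_diff_chain_at[OF this f] show ?thesis by (simp add: o_def scaleR_conv_of_real)
qed

context
  fixes \<theta> :: real and f f' :: "real \<Rightarrow> complex"
  assumes f: "\<And>q. (f has_vector_derivative f' q) (at q)"
begin
lemma d1: "((\<lambda>t. f (t - \<theta> * k / 2)) has_vector_derivative f' (t - \<theta> * k / 2)) (at t)"
proof -
  have "((\<lambda>t. t - \<theta> * k / 2) has_real_derivative 1) (at t)"
    by (rule derivative_eq_intros refl | simp)+
  from dcomp[OF f this] show ?thesis by simp
qed
lemma d2: "((\<lambda>t. f (t + \<theta> * k / 2)) has_vector_derivative f' (t + \<theta> * k / 2)) (at t)"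
proof -
  have "((\<lambda>t. t + \<theta> * k / 2) has_real_derivative 1) (at t)"
    by (rule derivative_eq_intros refl | simp)+
  from dcomp[OF f this] show ?thesis by simp
qed
lemma d3: "((\<lambda>k. f (t - \<theta> * k / 2)) has_vector_derivative (- of_real (\<theta> / 2)) * f' (t - \<theta> * k / 2)) (at k)"
proof -
  have "((\<lambda>k. t - \<theta> * k / 2) has_real_derivative (- (\<theta> / 2))) (at k)"
    by (rule derivative_eq_intros refl | simp)+
  from dcomp[OF f this] show ?thesis by simp
qed
lemma d4: "((\<lambda>k. f (t + \<theta> * k / 2)) has_vector_derivative (of_real (\<theta> / 2)) * f' (t + \<theta> * k / 2)) (at k)"
proof -
  have "((\<lambda>k. t + \<theta> * k / 2) has_real_derivative (\<theta> / 2)) (at k)"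
    by (rule derivative_eq_intros refl | simp)+
  from dcomp[OF f this] show ?thesis by simp
qed

end

lemma Temp_comp_m: "P1 f \<Longrightarrow> Temp (\<lambda>t k. f (t - \<theta> * k / 2))"
proof -
  assume "P1 f"
  from Temp_comp[OF this, of "- \<theta> / 2"] show ?thesis
    by (simp add: algebra_simps)
qed

lemma Temp_comp_p: "P1 f \<Longrightarrow> Temp (\<lambda>t k. f (t + \<theta> * k / 2))"
proof -
  assume "P1 f"
  from Temp_comp[OF this, of "\<theta> / 2"] show ?thesis
    by (simp add: algebra_simps)
qed

lemma alg:
  fixes G0 G1 G2 H0 H1 H2 t k E c u v \<beta> \<gamma> s lam :: complex
  assumes E: "E \<noteq> 0" and c: "c = 1 / E" and u: "u = t - c * k" and v: "v = t + c * k"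
    and g: "G2 = (- (E^2) / 4 * u^2 + \<beta>) * G0" and h: "H2 = (- (E^2) / 4 * v^2 + \<gamma>) * H0"
    and s: "s = 1 \<and> lam = -2 * \<beta> \<or> s = -1 \<and> lam = -2 * \<gamma>"
  shows "(-1/2) * (G2 * H0 + 2 * (G1 * H1) + G0 * H2) + (s * E) * (c * (G0 * H2 - G2 * H0))
     + (- (E^2) / 2) * (c^2 * (G2 * H0 - 2 * (G1 * H1) + G0 * H2))
     + (1/2) * (- (k^2) + 2 * s * E * t * k - (E^2) * t^2) * (G0 * H0) = lam * (G0 * H0)"
  using s
proof
  assume s: "s = 1 \<and> lam = -2 * \<beta>"
  then have s1: "s = 1" and l: "lam = -2 * \<beta>" by auto
  show ?thesis unfolding g h u v c s1 l using E by (simp add: field_simps power2_eq_square)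
next
  assume s: "s = -1 \<and> lam = -2 * \<gamma>"
  then have s1: "s = -1" and l: "lam = -2 * \<gamma>" by auto
  show ?thesis unfolding g h u v c s1 l using E by (simp add: field_simps power2_eq_square)
qed

theorem G_main:
  fixes g g1 g2 h h1 h2 :: "real \<Rightarrow> complex" and E \<theta> :: real and \<beta> \<gamma> :: complex
  assumes E: "E > 0" and th: "\<theta> = 2 / E"
    and P: "P1 g" "P1 g1" "P1 g2" "P1 h" "P1 h1" "P1 h2"
    and dg: "\<And>q. (g has_vector_derivative g1 q) (at q)"
    and dg1: "\<And>q. (g1 has_vector_derivative g2 q) (at q)"
    and dh: "\<And>q. (h has_vector_derivative h1 q) (at q)"
    and dh1: "\<And>q. (h1 has_vector_derivative h2 q) (at q)"
    and og: "\<And>q. g2 q = (- ((of_real E)^2) / 4 * (of_real q)^2 + \<beta>) * g q"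
    and oh: "\<And>q. h2 q = (- ((of_real E)^2) / 4 * (of_real q)^2 + \<gamma>) * h q"
    and \<phi>: "test_fun \<phi>"
    and s: "s = 1 \<and> lam = -2 * \<beta> \<or> s = -1 \<and> lam = -2 * \<gamma>"
  shows "II (\<lambda>t k. g (t - \<theta> * k / 2) * h (t + \<theta> * k / 2)) (DT s E \<phi>)
       = lam * II (\<lambda>t k. g (t - \<theta> * k / 2) * h (t + \<theta> * k / 2)) \<phi>"
proof -
  define c :: complex where "c = of_real (\<theta> / 2)"
  define F where "F = (\<lambda>t k. g (t - \<theta> * k / 2) * h (t + \<theta> * k / 2))"
  define Ft where "Ft = (\<lambda>t k. g1 (t - \<theta> * k / 2) * h (t + \<theta> * k / 2) + g (t - \<theta> * k / 2) * h1 (t + \<theta> * k / 2))"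
  define Fk where "Fk = (\<lambda>t k. c * (g (t - \<theta> * k / 2) * h1 (t + \<theta> * k / 2) - g1 (t - \<theta> * k / 2) * h (t + \<theta> * k / 2)))"
  define Ftt where "Ftt = (\<lambda>t k. g2 (t - \<theta> * k / 2) * h (t + \<theta> * k / 2) + 2 * (g1 (t - \<theta> * k / 2) * h1 (t + \<theta> * k / 2))
       + g (t - \<theta> * k / 2) * h2 (t + \<theta> * k / 2))"
  define Fkt where "Fkt = (\<lambda>t k. c * (g (t - \<theta> * k / 2) * h2 (t + \<theta> * k / 2) - g2 (t - \<theta> * k / 2) * h (t + \<theta> * k / 2)))"
  define Fkk where "Fkk = (\<lambda>t k. c^2 * (g2 (t - \<theta> * k / 2) * h (t + \<theta> * k / 2) - 2 * (g1 (t - \<theta> * k / 2) * h1 (t + \<theta> * k / 2))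
       + g (t - \<theta> * k / 2) * h2 (t + \<theta> * k / 2)))"
  note TI = Temp_add Temp_diff Temp_mult Temp_const Temp_comp_m Temp_comp_p P
  have T: "Temp F" "Temp Ft" "Temp Fk" "Temp Ftt" "Temp Fkt" "Temp Fkk"
    unfolding F_def Ft_def Fk_def Ftt_def Fkt_def Fkk_def by (intro TI)+
  have dFt: "((\<lambda>t. F t k) has_vector_derivative Ft t k) (at t)" for t k
    unfolding F_def Ft_def
    by (rule d1[OF dg] d2[OF dh] derivative_eq_intros refl | simp add: algebra_simps)+
  have dFtt: "((\<lambda>t. Ft t k) has_vector_derivative Ftt t k) (at t)" for t k
    unfolding Ft_def Ftt_def
    by (rule d1[OF dg] d2[OF dh] d1[OF dg1] d2[OF dh1] derivative_eq_intros refl | simp add: algebra_simps)+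
  have dFk: "((\<lambda>k. F t k) has_vector_derivative Fk t k) (at k)" for t k
    unfolding F_def Fk_def c_def
    by (rule d3[OF dg] d4[OF dh] derivative_eq_intros refl | simp add: algebra_simps)+
  have dFkt: "((\<lambda>t. Fk t k) has_vector_derivative Fkt t k) (at t)" for t k
    unfolding Fk_def Fkt_def
    by (rule d1[OF dg] d2[OF dh] d1[OF dg1] d2[OF dh1] derivative_eq_intros refl | simp add: algebra_simps)+
  have dFkk: "((\<lambda>k. Fk t k) has_vector_derivative Fkk t k) (at k)" for t k
    unfolding Fk_def Fkk_def c_def
    by (rule d3[OF dg] d4[OF dh] d3[OF dg1] d4[OF dh1] derivative_eq_intros refl | simp add: algebra_simps power2_eq_square)+
  have ev: "(-1/2) * Ftt t k + (s * of_real E) * Fkt t k + (- of_real (E^2) / 2) * Fkk t k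
       + (1/2) * (- of_real (k^2) + 2 * s * of_real E * of_real t * of_real k - of_real (E^2 * t^2)) * F t k
       = lam * F t k" for t k
  proof -
    have "(-1/2) * (g2 (t - \<theta> * k / 2) * h (t + \<theta> * k / 2) + 2 * (g1 (t - \<theta> * k / 2) * h1 (t + \<theta> * k / 2)) + g (t - \<theta> * k / 2) * h2 (t + \<theta> * k / 2))
     + (s * of_real E) * (c * (g (t - \<theta> * k / 2) * h2 (t + \<theta> * k / 2) - g2 (t - \<theta> * k / 2) * h (t + \<theta> * k / 2)))
     + (- ((of_real E)^2) / 2) * (c^2 * (g2 (t - \<theta> * k / 2) * h (t + \<theta> * k / 2) - 2 * (g1 (t - \<theta> * k / 2) * h1 (t + \<theta> * k / 2)) + g (t - \<theta> * k / 2) * h2 (t + \<theta> * k / 2)))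
     + (1/2) * (- ((of_real k)^2) + 2 * s * of_real E * of_real t * of_real k - (of_real E)^2 * (of_real t)^2) * (g (t - \<theta> * k / 2) * h (t + \<theta> * k / 2))
     = lam * (g (t - \<theta> * k / 2) * h (t + \<theta> * k / 2))"
    proof (rule alg[OF _ _ _ _ og oh s])
      show "complex_of_real E \<noteq> 0" using E by simp
      show "c = 1 / complex_of_real E" unfolding c_def th by simp
      show "complex_of_real (t - \<theta> * k / 2) = complex_of_real t - c * complex_of_real k" unfolding c_def by simp
      show "complex_of_real (t + \<theta> * k / 2) = complex_of_real t + c * complex_of_real k" unfolding c_def by simp
    qed
    then show ?thesis unfolding F_def Ftt_def Fkt_def Fkk_def by simp
  qed
  show ?thesis
    using E_main[OF T dFt dFtt dFk dFkt dFkk \<phi> ev] unfolding F_def .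
qed

lemma P1_sq: "P1 (\<lambda>q. (of_real q)^2)"
  using P1_mult[OF P1_id P1_id] by (simp add: power2_eq_square)

lemma gfun:
  fixes a s c :: complex and E :: real and n :: nat
  assumes sa: "s^2 = a" and Re: "Re a = 0" and a2: "a^2 = - ((of_real E)^2) / 4"
  defines "g \<equiv> \<lambda>q. Gc c a s n (of_real q)"
    and "g1 \<equiv> \<lambda>q. G1 c a s n (of_real q)"
    and "g2 \<equiv> \<lambda>q. (- ((of_real E)^2) / 4 * (of_real q)^2 + (- a * (2 * of_nat n + 1))) * Gc c a s n (of_real q)"
  shows "P1 g" "P1 g1" "P1 g2"
    "\<And>q. (g has_vector_derivative g1 q) (at q)"
    "\<And>q. (g1 has_vector_derivative g2 q) (at q)"
proof -
  show Pg: "P1 g" unfolding g_def Gc_def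
    by (intro P1_mult P1_const P1_expi P1_hermite Re)
  show "P1 g1" unfolding g1_def G1_def
    by (intro P1_mult P1_add P1_const P1_expi P1_hermite P1_id Re)
  show "P1 g2" unfolding g2_def
    by (intro P1_mult P1_add P1_const P1_sq Pg[unfolded g_def])
  show "(g has_vector_derivative g1 q) (at q)" for q
    unfolding g_def g1_def by (rule has_vector_derivative_real_field[OF Gc_deriv])
  show "(g1 has_vector_derivative g2 q) (at q)" for q
  proof -
    have "(g1 has_vector_derivative ((a^2 * (of_real q)^2 - a * (2 * of_nat n + 1)) * Gc c a s n (of_real q))) (at q)"
      unfolding g1_def by (rule has_vector_derivative_real_field[OF G1_deriv[OF sa]])
    moreover have "(a^2 * (of_real q)^2 - a * (2 * of_nat n + 1)) * Gc c a s n (of_real q) = g2 q"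
      unfolding g2_def a2 by (simp add: algebra_simps)
    ultimately show ?thesis by simp
  qed
qed

lemma hfun:
  fixes a s c :: complex and E :: real and n :: nat
  assumes sa: "s^2 = a" and Re: "Re a = 0" and a2: "a^2 = - ((of_real E)^2) / 4"
  defines "h \<equiv> \<lambda>q. cnj (Gc c a s n (of_real q))"
    and "h1 \<equiv> \<lambda>q. cnj (G1 c a s n (of_real q))"
    and "h2 \<equiv> \<lambda>q. (- ((of_real E)^2) / 4 * (of_real q)^2 + (- cnj a * (2 * of_nat n + 1))) * cnj (Gc c a s n (of_real q))"
  shows "P1 h" "P1 h1" "P1 h2"
    "\<And>q. (h has_vector_derivative h1 q) (at q)"
    "\<And>q. (h1 has_vector_derivative h2 q) (at q)"
proof -
  note G = gfun[OF sa Re a2, where c=c and n=n]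
  show Ph: "P1 h" unfolding h_def by (rule P1_cnj[OF G(1)])
  show "P1 h1" unfolding h1_def by (rule P1_cnj[OF G(2)])
  show "P1 h2" unfolding h2_def by (intro P1_mult P1_add P1_const P1_sq Ph[unfolded h_def])
  show "(h has_vector_derivative h1 q) (at q)" for q
    unfolding h_def h1_def by (rule has_vector_derivative_cnj[OF G(4)])
  show "(h1 has_vector_derivative h2 q) (at q)" for q
  proof -
    have "(h1 has_vector_derivative cnj ((- ((of_real E)^2) / 4 * (of_real q)^2 + (- a * (2 * of_nat n + 1))) * Gc c a s n (of_real q))) (at q)"
      unfolding h1_def by (rule has_vector_derivative_cnj[OF G(5)])
    moreover have "cnj ((- ((of_real E)^2) / 4 * (of_real q)^2 + (- a * (2 * of_nat n + 1))) * Gc c a s n (of_real q)) = h2 q"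
      unfolding h2_def by simp
    ultimately show ?thesis by simp
  qed
qed

lemma fpm_Gc: "fpm E' \<sigma> n q = Gc ((of_real \<sigma> * \<i>) powr (1/4) * of_real (normN E' n)) (of_real \<sigma> * \<i> * of_real E')
    (csqrt (of_real \<sigma> * \<i> * of_real E')) n (of_real q)"
  unfolding fpm_def Gc_def by (simp add: algebra_simps)

lemma wig_pair_II: "wig_pair E \<theta> \<sigma> n m \<phi> = (1 / (2 * of_real pi)) * II (wigF E \<theta> \<sigma> n m) \<phi>"
  unfolding wig_pair_def II_def psi_def by simp

theorem lemma4:
  fixes E \<theta> \<sigma> :: real and n m :: nat
  assumes "E > 0" and "\<theta> = 2 / E" and "\<sigma> = 1 \<or> \<sigma> = -1"
  shows "(\<forall>\<phi>. test_fun \<phi> \<longrightarrow>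
            wig_pair E \<theta> \<sigma> n m (Dsq_T E \<phi>) = of_real \<sigma> * calE E n * wig_pair E \<theta> \<sigma> n m \<phi>)
       \<and> (\<forall>\<phi>. test_fun \<phi> \<longrightarrow>
            wig_pair E \<theta> \<sigma> n m (Dtsq_T E \<phi>) = of_real \<sigma> * calE E m * wig_pair E \<theta> \<sigma> n m \<phi>)"
proof -
  note E = assms(1) and th = assms(2)
  have ss: "\<sigma> * \<sigma> = 1" using assms(3) by auto
  define a where "a = of_real \<sigma> * \<i> * of_real (E/2)"
  define s where "s = csqrt a"
  define c where "c = (of_real \<sigma> * \<i>) powr (1/4) * of_real (normN (E/2) n)"
  define a' where "a' = of_real (-\<sigma>) * \<i> * of_real (E/2)"
  define s' where "s' = csqrt a'"
  define c' where "c' = (of_real (-\<sigma>) * \<i>) powr (1/4) * of_real (normN (E/2) m)"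
  have sa: "s^2 = a" "s'^2 = a'" unfolding s_def s'_def by simp_all
  have Re: "Re a = 0" "Re a' = 0" unfolding a_def a'_def by simp_all
  have a2: "a^2 = - ((of_real E)^2) / 4" "a'^2 = - ((of_real E)^2) / 4"
  proof -
    have "complex_of_real \<sigma> * complex_of_real \<sigma> = 1" using ss by (metis of_real_mult of_real_1)
    then show "a^2 = - ((of_real E)^2) / 4" "a'^2 = - ((of_real E)^2) / 4"
      unfolding a_def a'_def by (simp_all add: power2_eq_square algebra_simps)
  qed
  note G = gfun[OF sa(1) Re(1) a2(1), where c=c and n=n]
  note H = hfun[OF sa(2) Re(2) a2(2), where c=c' and n=m]
  have W: "wigF E \<theta> \<sigma> n m = (\<lambda>t k. Gc c a s n (of_real (t - \<theta> * k / 2)) * cnj (Gc c' a' s' m (of_real (t + \<theta> * k / 2))))"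
    unfolding wigF_def fpm_Gc a_def s_def c_def a'_def s'_def c'_def by (simp add: fun_eq_iff)
  have main: "II (wigF E \<theta> \<sigma> n m) (DT sg E \<phi>) = lam * II (wigF E \<theta> \<sigma> n m) \<phi>"
    if "test_fun \<phi>" "sg = 1 \<and> lam = -2 * (- a * (2 * of_nat n + 1)) \<or> sg = -1 \<and> lam = -2 * (- cnj a' * (2 * of_nat m + 1))"
    for \<phi> sg lam
    unfolding W
    by (rule G_main[OF E th G(1-3) H(1-3) G(4,5) H(4,5) _ _ that]) simp_all
  have l1: "-2 * (- a * (2 * of_nat n + 1)) = of_real \<sigma> * calE E n"
    unfolding a_def calE_def by (simp add: field_simps)
  have l2: "-2 * (- cnj a' * (2 * of_nat m + 1)) = of_real \<sigma> * calE E m"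
    unfolding a'_def calE_def by (simp add: field_simps)
  show ?thesis
  proof (intro conjI allI impI)
    fix \<phi> assume "test_fun \<phi>"
    show "wig_pair E \<theta> \<sigma> n m (Dsq_T E \<phi>) = of_real \<sigma> * calE E n * wig_pair E \<theta> \<sigma> n m \<phi>"
      unfolding wig_pair_II Dsq_T_DT main[OF \<open>test_fun \<phi>\<close>, of 1 "of_real \<sigma> * calE E n", OF disjI1[OF conjI[OF refl l1[symmetric]]]]
      by simp
    show "wig_pair E \<theta> \<sigma> n m (Dtsq_T E \<phi>) = of_real \<sigma> * calE E m * wig_pair E \<theta> \<sigma> n m \<phi>"
      unfolding wig_pair_II Dtsq_T_DT main[OF \<open>test_fun \<phi>\<close>, of "-1" "of_real \<sigma> * calE E m", OF disjI2[OF conjI[OF refl l2[symmetric]]]]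
      by simp
  qed
qed

end
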